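(* Let $Q$ be a quadratic form on $\mathbb{F}_{q_1}/\mathbb{F}_q$ with rank $r_Q$. Let $H_r$ be an $r$-dimensional $\mathbb{F}_q$-subspace of $\mathbb{F}_q\times\mathbb{F}_{q_2}$ and \[N(H_r)=\#\{(x,y)\in\mathbb{F}^\star: aQ(x)+\mathrm{Tr}_{q_2/q}(by)=0 \text{ for all }(a,b)\in H_r\}.\] Let $t=\#\{(a,0)\in H_r: a\ne0\}$. Then $N(H_r)=q^{M-r}(\epsilon tq^{-r_Q/2}+1)-1$ if $r_Q$ is even, and $N(H_r)=q^{M-r}-1$ if $r_Q$ is odd.
   Context: Let $p$ be an odd prime, $m\ge1$, $q=p^m$. Let $m_1,m_2$ be positive integers, $M=m_1+m_2$, $q_i=q^{m_i}$, $\mathbb{F}=\mathbb{F}_{q_1}\times\mathbb{F}_{q_2}$, $\mathbb{F}^\star=\mathbb{F}\setminus\{(0,0)\}$. $\mathrm{Tr}_{q^s/q}$ is the trace $\mathbb{F}_{q^s}\to\mathbb{F}_q$; $\eta$ is the quadratic character of $\mathbb{F}_q$ with $\eta(0)=0$. A quadratic form $Q$ on $\mathbb{F}_{q_1}/\mathbb{F}_q$ is a map $Q:\mathbb{F}_{q_1}\to\mathbb{F}_q$ with $Q(ax)=a^2Q(x)$ ($a\in\mathbb{F}_q$) such that $B_Q(x,y)=\frac12(Q(x+y)-Q(x)-Q(y))$ is $\mathbb{F}_q$-bilinear; rank $r_Q=m_1-\dim_{\mathbb{F}_q}\{x:B_Q(x,y)=0\ \forall y\}$; in suitable coordinates $Q=\sum_{i=1}^{r_Q}\lambda_ix_i^2$,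 $\lambda_i\in\mathbb{F}_q^*$; $\Delta_Q=\lambda_1\cdots\lambda_{r_Q}$ ($1$ if $r_Q=0$), $\varepsilon_Q=\eta(\Delta_Q)$. $\epsilon=\varepsilon_Q(-1)^{(p-1)mr_Q/4}$ if $r_Q$ even, $\epsilon=\varepsilon_Q(-1)^{(p-1)m(r_Q+1)/4}$ if $r_Q$ odd. *)

theory Defs
  imports Complex_Main "HOL-Library.FuncSet" "HOL-Computational_Algebra.Primes"
begin

(* All fields live inside one ambient finite field 'a; F_q, F_{q1}, F_{q2} are subfields. *)

definition subfield :: "'a::{field,finite} set \<Rightarrow> bool" where
  "subfield S \<longleftrightarrow> 0 \<in> S \<and> 1 \<in> S \<and>
     (\<forall>x\<in>S. \<forall>y\<in>S. x + y \<in> S \<and> x * y \<in> S) \<and>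
     (\<forall>x\<in>S. - x \<in> S \<and> inverse x \<in> S)"

definition trace :: "nat \<Rightarrow> nat \<Rightarrow> 'a::{field,finite} \<Rightarrow> 'a" where
  "trace q s z = (\<Sum>i<s. z ^ (q ^ i))"

definition eta :: "'a::{field,finite} set \<Rightarrow> 'a \<Rightarrow> int" where
  "eta K a = (if a = 0 then 0 else if (\<exists>y\<in>K. y * y = a) then 1 else -1)"

(* dimension over K of a K-subspace V (a K-space of dimension d has card K ^ d elements) *)
definition dimK :: "'a set \<Rightarrow> 'b set \<Rightarrow> nat" where
  "dimK K V = (THE d. card V = card K ^ d)"

definition bform :: "('a::{field,finite} \<Rightarrow> 'a) \<Rightarrow> 'a \<Rightarrow> 'a \<Rightarrow> 'a" where
  "bform Q x y = (Q (x + y) - Q x - Q y) / 2"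

definition is_qform :: "'a::{field,finite} set \<Rightarrow> 'a set \<Rightarrow> ('a \<Rightarrow> 'a) \<Rightarrow> bool" where
  "is_qform K E Q \<longleftrightarrow>
     (\<forall>x\<in>E. Q x \<in> K) \<and>
     (\<forall>a\<in>K. \<forall>x\<in>E. Q (a * x) = a ^ 2 * Q x) \<and>
     (\<forall>a\<in>K. \<forall>x\<in>E. \<forall>x'\<in>E. \<forall>y\<in>E.
         bform Q (a * x + x') y = a * bform Q x y + bform Q x' y) \<and>
     (\<forall>a\<in>K. \<forall>x\<in>E. \<forall>y\<in>E. \<forall>y'\<in>E.
         bform Q x (a * y + y') = a * bform Q x y + bform Q x y')"

definition qf_radical :: "'a::{field,finite} set \<Rightarrow> ('a \<Rightarrow> 'a) \<Rightarrow> 'a set" where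
  "qf_radical E Q = {x\<in>E. \<forall>y\<in>E. bform Q x y = 0}"

definition qf_rank :: "'a::{field,finite} set \<Rightarrow> 'a set \<Rightarrow> nat \<Rightarrow> ('a \<Rightarrow> 'a) \<Rightarrow> nat" where
  "qf_rank K E n Q = n - dimK K (qf_radical E Q)"

definition K_basis :: "'a::{field,finite} set \<Rightarrow> 'a set \<Rightarrow> nat \<Rightarrow> (nat \<Rightarrow> 'a) \<Rightarrow> bool" where
  "K_basis K E n b \<longleftrightarrow>
     (\<forall>c\<in>{..<n} \<rightarrow>\<^sub>E K. (\<Sum>i<n. c i * b i) \<in> E) \<and>
     (\<forall>x\<in>E. \<exists>!c. c \<in> {..<n} \<rightarrow>\<^sub>E K \<and> x = (\<Sum>i<n. c i * b i))"

definition qf_diag :: "'a::{field,finite} set \<Rightarrow> 'a set \<Rightarrow> nat \<Rightarrow> ('a \<Rightarrow> 'a) \<Rightarrow> nat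
     \<Rightarrow> (nat \<Rightarrow> 'a) \<Rightarrow> (nat \<Rightarrow> 'a) \<Rightarrow> bool" where
  "qf_diag K E n Q r lam b \<longleftrightarrow> K_basis K E n b \<and> (\<forall>i<r. lam i \<in> K - {0}) \<and>
     (\<forall>c\<in>{..<n} \<rightarrow>\<^sub>E K. Q (\<Sum>i<n. c i * b i) = (\<Sum>i<r. lam i * c i ^ 2))"

definition qf_Delta :: "'a::{field,finite} set \<Rightarrow> 'a set \<Rightarrow> nat \<Rightarrow> ('a \<Rightarrow> 'a) \<Rightarrow> 'a" where
  "qf_Delta K E n Q = (let r = qf_rank K E n Q;
      lam = (SOME lam. \<exists>b. qf_diag K E n Q r lam b) in (\<Prod>i<r. lam i))"

definition qf_varepsilon :: "'a::{field,finite} set \<Rightarrow> 'a set \<Rightarrow> nat \<Rightarrow> ('a \<Rightarrow> 'a) \<Rightarrow> int" where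
  "qf_varepsilon K E n Q = eta K (qf_Delta K E n Q)"

definition qf_epsilon :: "nat \<Rightarrow> nat \<Rightarrow> 'a::{field,finite} set \<Rightarrow> 'a set \<Rightarrow> nat \<Rightarrow> ('a \<Rightarrow> 'a) \<Rightarrow> int" where
  "qf_epsilon p m K E n Q = (let r = qf_rank K E n Q in
     if even r then qf_varepsilon K E n Q * (-1) ^ ((p - 1) * m * r div 4)
     else qf_varepsilon K E n Q * (-1) ^ ((p - 1) * m * (r + 1) div 4))"

definition K_subspace_pair :: "'a::{field,finite} set \<Rightarrow> 'a set \<Rightarrow> ('a \<times> 'a) set \<Rightarrow> bool" where
  "K_subspace_pair K E2 H \<longleftrightarrow> H \<subseteq> K \<times> E2 \<and> (0, 0) \<in> H \<and>
     (\<forall>u\<in>H. \<forall>v\<in>H. (fst u + fst v, snd u + snd v) \<in> H) \<and>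
     (\<forall>c\<in>K. \<forall>u\<in>H. (c * fst u, c * snd u) \<in> H)"

end

theory Submission
  imports Defs "HOL-Computational_Algebra.Polynomial" "HOL-Library.Product_Plus"
begin

lemma subfield_props:
  assumes "subfield S"
  shows "0 \<in> S" "1 \<in> S" "x \<in> S \<Longrightarrow> y \<in> S \<Longrightarrow> x + y \<in> S"
    "x \<in> S \<Longrightarrow> y \<in> S \<Longrightarrow> x * y \<in> S" "x \<in> S \<Longrightarrow> - x \<in> S"
    "x \<in> S \<Longrightarrow> inverse x \<in> S"
  using assms unfolding subfield_def by auto

lemma subfield_diff: "subfield S \<Longrightarrow> x \<in> S \<Longrightarrow> y \<in> S \<Longrightarrow> x - y \<in> S"
  using subfield_props[of S] by (metis diff_conv_add_uminus)

lemma subfield_divide: "subfield S \<Longrightarrow> x \<in> S \<Longrightarrow> y \<in> S \<Longrightarrow> x / y \<in> S"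
  using subfield_props[of S] by (metis divide_inverse)

lemma subfield_power: "subfield S \<Longrightarrow> x \<in> S \<Longrightarrow> x ^ n \<in> S"
  by (induction n) (auto simp: subfield_props)

lemma subfield_sum: "subfield S \<Longrightarrow> (\<And>i. i \<in> A \<Longrightarrow> f i \<in> S) \<Longrightarrow> sum f A \<in> S"
  by (induction A rule: infinite_finite_induct) (auto simp: subfield_props)

lemma subfield_prod: "subfield S \<Longrightarrow> (\<And>i. i \<in> A \<Longrightarrow> f i \<in> S) \<Longrightarrow> prod f A \<in> S"
  by (induction A rule: infinite_finite_induct) (auto simp: subfield_props)

lemma subfield_numeral: "subfield S \<Longrightarrow> of_nat n \<in> S"
  by (induction n) (auto simp: subfield_props)

lemma subfield_two: "subfield S \<Longrightarrow> (2::'a::{field,finite}) \<in> S"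
  using subfield_numeral[of S 2] by simp

lemma subfield_pow_card:
  fixes S :: "'a::{field,finite} set"
  assumes "subfield S" "x \<in> S"
  shows "x ^ card S = x"
proof (cases "x = 0")
  case True
  have "0 \<in> S" using subfield_props(1)[OF assms(1)] .
  hence "0 < card S" by (auto simp: card_gt_0_iff)
  then show ?thesis using True by (simp add: zero_power)
next
  case False
  let ?S = "S - {0}"
  have fin: "finite ?S" by simp
  have bij: "bij_betw (\<lambda>y. x * y) ?S ?S"
  proof (rule bij_betw_imageI)
    show "inj_on ((*) x) ?S" using False by (auto simp: inj_on_def)
    show "(*) x ` ?S = ?S"
    proof
      show "(*) x ` ?S \<subseteq> ?S" using False assms subfield_props(4)[OF assms(1)] by auto
      show "?S \<subseteq> (*) x ` ?S"
      proof
        fix y assume y: "y \<in> ?S"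
        have "y = x * (y / x)" using False by simp
        moreover have "y / x \<in> ?S" using y False assms subfield_divide by auto
        ultimately show "y \<in> (*) x ` ?S" by blast
      qed
    qed
  qed
  have "prod (\<lambda>y. x * y) ?S = prod (\<lambda>y. y) ?S"
    using prod.reindex_bij_betw[OF bij, of "\<lambda>y. y"] by simp
  hence "x ^ card ?S * prod (\<lambda>y. y) ?S = prod (\<lambda>y. y) ?S"
    by (simp add: prod.distrib)
  moreover have "prod (\<lambda>y. y) ?S \<noteq> 0" by simp
  ultimately have 1: "x ^ card ?S = 1" by simp
  have "card S = Suc (card ?S)" using subfield_props(1)[OF assms(1)]
    by (intro card_Suc_Diff1[symmetric]) auto
  hence "x ^ card S = x * x ^ card ?S" by simp
  then show ?thesis using 1 by simp
qed


locale ff =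
  fixes K :: "'a::{field,finite} set" and p m q :: nat
  assumes sfK: "subfield K" and cardK: "card K = q" and qdef: "q = p ^ m"
    and pp: "prime p" and podd: "odd p" and mpos: "m \<ge> 1"
begin

lemma K0: "0 \<in> K" and K1: "1 \<in> K"
  and Kadd: "x \<in> K \<Longrightarrow> y \<in> K \<Longrightarrow> x + y \<in> K"
  and Kmult: "x \<in> K \<Longrightarrow> y \<in> K \<Longrightarrow> x * y \<in> K"
  and Kuminus: "x \<in> K \<Longrightarrow> - x \<in> K"
  and Kdiff: "x \<in> K \<Longrightarrow> y \<in> K \<Longrightarrow> x - y \<in> K"
  and Kdiv: "x \<in> K \<Longrightarrow> y \<in> K \<Longrightarrow> x / y \<in> K"
  and Kpow: "x \<in> K \<Longrightarrow> x ^ n \<in> K"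
  using subfield_props[OF sfK] subfield_diff[OF sfK] subfield_divide[OF sfK] subfield_power[OF sfK]
  by auto

lemma Ksum: "(\<And>i. i \<in> A \<Longrightarrow> f i \<in> K) \<Longrightarrow> sum f A \<in> K"
  using subfield_sum[OF sfK] by blast

lemma Kprod: "(\<And>i. i \<in> A \<Longrightarrow> f i \<in> K) \<Longrightarrow> prod f A \<in> K"
  using subfield_prod[OF sfK] by blast

lemma K2: "(2::'a) \<in> K" using subfield_two[OF sfK] .

lemma p_gt1: "p > 1" using pp prime_gt_1_nat by blast

lemma q_odd: "odd q" using podd by (simp add: qdef)

lemma q_ge3: "q \<ge> 3"
proof -
  have "p \<ge> 2" using p_gt1 by simp
  hence "p \<ge> 3" using podd by presburger
  moreover have "p \<le> q" unfolding qdef using mpos p_gt1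
    by (intro self_le_power) auto
  ultimately show ?thesis by simp
qed

lemma q_pos: "q > 0" using q_ge3 by simp

lemma of_nat_q: "of_nat q = (0::'a)"
proof -
  have bij: "bij_betw (\<lambda>x. x + 1) K K"
  proof (rule bij_betw_imageI)
    show "inj_on (\<lambda>x. x + 1) K" by (auto simp: inj_on_def)
    show "(\<lambda>x. x + 1) ` K = K"
    proof
      show "(\<lambda>x. x + 1) ` K \<subseteq> K" using Kadd K1 by auto
      show "K \<subseteq> (\<lambda>x. x + 1) ` K"
      proof
        fix y assume "y \<in> K"
        hence "y - 1 \<in> K" using Kdiff K1 by auto
        moreover have "y = (y - 1) + 1" by simp
        ultimately show "y \<in> (\<lambda>x. x + 1) ` K" by blast
      qed
    qed
  qed
  have "sum (\<lambda>x. x + 1) K = sum (\<lambda>x. x) K"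
    using sum.reindex_bij_betw[OF bij, of "\<lambda>x. x"] by simp
  hence "sum (\<lambda>x. x) K + of_nat (card K) = sum (\<lambda>x. x) K"
    by (simp add: sum.distrib)
  thus ?thesis using cardK by simp
qed

lemma CHAR_eq: "CHAR('a) = p"
proof -
  have "(of_nat p :: 'a) ^ m = 0" using of_nat_q by (simp add: qdef)
  hence "of_nat p = (0::'a)" by simp
  hence d: "CHAR('a) dvd p" by (simp add: of_nat_eq_0_iff_char_dvd)
  have "CHAR('a) \<noteq> 1"
  proof
    assume "CHAR('a) = 1"
    hence "of_nat 1 = (0::'a)" using of_nat_CHAR[where 'a='a] by metis
    thus False by simp
  qed
  thus ?thesis using d pp by (metis prime_nat_iff)
qed

lemma CHAR_prime: "prime CHAR('a)" using CHAR_eq pp by simp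

lemma two_nz: "(2::'a) \<noteq> 0"
proof
  assume "(2::'a) = 0"
  hence "of_nat 2 = (0::'a)" by simp
  hence "p dvd 2" using CHAR_eq by (metis of_nat_eq_0_iff_char_dvd)
  hence "p \<le> 2" by (simp add: dvd_imp_le)
  thus False using p_gt1 podd by presburger
qed

lemma frob_add: "(x + y :: 'a) ^ (q ^ i) = x ^ (q ^ i) + y ^ (q ^ i)"
proof -
  have "q ^ i = CHAR('a) ^ (m * i)" by (simp add: CHAR_eq qdef power_mult)
  thus ?thesis using freshmans_dream'[OF CHAR_prime] by blast
qed

lemma frob_sum: "(sum f A :: 'a) ^ (q ^ i) = sum (\<lambda>j. f j ^ (q ^ i)) A"
proof -
  have "q ^ i = CHAR('a) ^ (m * i)" by (simp add: CHAR_eq qdef power_mult)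
  thus ?thesis using freshmans_dream_sum'[OF CHAR_prime] by blast
qed

lemma K_powq: "c \<in> K \<Longrightarrow> c ^ q = c"
  using subfield_pow_card[OF sfK] cardK by blast

lemma K_powqi: "c \<in> K \<Longrightarrow> c ^ (q ^ i) = c"
proof (induction i)
  case (Suc i)
  have "c ^ (q ^ Suc i) = (c ^ (q ^ i)) ^ q" by (simp add: power_mult[symmetric] mult.commute)
  thus ?case using Suc K_powq by simp
qed simp

lemma roots_in_K: "w ^ q = w \<Longrightarrow> w \<in> K"
proof -
  assume w: "w ^ q = w"
  define P :: "'a poly" where "P = monom 1 q - monom 1 1"
  have pe: "poly P x = x ^ q - x" for x by (simp add: P_def poly_monom)
  have "coeff P q = 1" using q_ge3 by (simp add: P_def coeff_monom)
  hence Pnz: "P \<noteq> 0" by auto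
  have "degree P \<le> q" unfolding P_def
    by (metis degree_diff_le degree_monom_le le_trans one_le_numeral q_ge3 order.trans)
  hence cb: "card {x. poly P x = 0} \<le> q" using card_poly_roots_bound[OF Pnz] by linarith
  have sub: "K \<subseteq> {x. poly P x = 0}" using K_powq pe by auto
  have "K = {x. poly P x = 0}"
    using card_subset_eq[OF _ sub] cb cardK card_mono[OF _ sub] by simp
  thus "w \<in> K" using pe w by simp
qed

definition hq :: nat where "hq = (q - 1) div 2"

lemma hq_pos: "hq \<ge> 1" using q_ge3 by (simp add: hq_def)
lemma two_hq: "2 * hq = q - 1" using q_odd q_ge3 by (simp add: hq_def)

definition sqK :: "'a set" where "sqK = {a \<in> K - {0}. \<exists>y\<in>K. y * y = a}"

lemma K_pow_q1: "y \<in> K \<Longrightarrow> y \<noteq> 0 \<Longrightarrow> y ^ (q - 1) = 1"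
proof -
  assume y: "y \<in> K" "y \<noteq> 0"
  have "y * y ^ (q - 1) = y ^ q" using q_pos by (metis Suc_diff_1 power_Suc)
  also have "\<dots> = y * 1" using K_powq y by simp
  finally show ?thesis using y by simp
qed

lemma sq_fiber:
  assumes "y0 \<in> K" "y0 \<noteq> 0"
  shows "{y \<in> K - {0}. y * y = y0 * y0} = {y0, - y0}"
proof
  show "{y \<in> K - {0}. y * y = y0 * y0} \<subseteq> {y0, - y0}"
  proof
    fix y assume "y \<in> {y \<in> K - {0}. y * y = y0 * y0}"
    hence "(y - y0) * (y + y0) = 0" by (simp add: algebra_simps)
    thus "y \<in> {y0, - y0}" by (auto simp: add_eq_0_iff2)
  qed
  show "{y0, - y0} \<subseteq> {y \<in> K - {0}. y * y = y0 * y0}" using assms Kuminus by auto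
qed

lemma card_sqK: "2 * card sqK = q - 1"
proof -
  have eq: "K - {0} = (\<Union>a\<in>sqK. {y \<in> K - {0}. y * y = a})"
  proof
    show "K - {0} \<subseteq> (\<Union>a\<in>sqK. {y \<in> K - {0}. y * y = a})"
    proof
      fix x assume x: "x \<in> K - {0}"
      have "x * x \<in> K" using Kmult x by blast
      moreover have "x * x \<noteq> 0" using x by simp
      ultimately have "x * x \<in> sqK" unfolding sqK_def using x by blast
      thus "x \<in> (\<Union>a\<in>sqK. {y \<in> K - {0}. y * y = a})" using x by blast
    qed
    show "(\<Union>a\<in>sqK. {y \<in> K - {0}. y * y = a}) \<subseteq> K - {0}" by (rule UN_least) (rule Collect_subset)
  qed
  have "card (K - {0}) = card (\<Union>a\<in>sqK. {y \<in> K - {0}. y * y = a})"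
    by (rule arg_cong[OF eq])
  also have "\<dots> = (\<Sum>a\<in>sqK. card {y \<in> K - {0}. y * y = a})"
    by (rule card_UN_disjoint) auto
  also have "\<dots> = (\<Sum>a\<in>sqK. 2)"
  proof (rule sum.cong[OF refl])
    fix a assume "a \<in> sqK"
    then obtain y0 where y0: "y0 \<in> K" "y0 \<noteq> 0" "a = y0 * y0" by (auto simp: sqK_def)
    have "y0 \<noteq> - y0"
    proof
      assume "y0 = - y0"
      hence "y0 + y0 = 0" using eq_neg_iff_add_eq_0 by blast
      hence "2 * y0 = 0" using mult_2[of y0] by argo
      thus False using y0 two_nz by simp
    qed
    thus "card {y \<in> K - {0}. y * y = a} = 2" using sq_fiber[OF y0(1,2)] y0(3) by simp
  qed
  finally show ?thesis using cardK K0 by (simp add: card_Diff_singleton)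
qed

lemma card_sqK': "card sqK = hq" using card_sqK two_hq by simp

lemma sqK_iff: "a \<in> K - {0} \<Longrightarrow> a \<in> sqK \<longleftrightarrow> a ^ hq = 1"
proof -
  assume a: "a \<in> K - {0}"
  define P :: "'a poly" where "P = monom 1 hq - 1"
  have pe: "poly P x = x ^ hq - 1" for x by (simp add: P_def poly_monom)
  have "coeff P hq = 1" using hq_pos by (simp add: P_def coeff_monom)
  hence Pnz: "P \<noteq> 0" by auto
  have "degree P \<le> hq" unfolding P_def
    by (metis degree_diff_le degree_monom_le degree_1 le_zero_eq zero_le)
  hence cb: "card {x. poly P x = 0} \<le> hq" using card_poly_roots_bound[OF Pnz] by linarith
  have sub: "sqK \<subseteq> {x. poly P x = 0}"
  proof
    fix b assume "b \<in> sqK"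
    then obtain y where y: "y \<in> K" "y \<noteq> 0" "b = y * y" by (auto simp: sqK_def)
    have "b ^ hq = y ^ (2 * hq)" using y by (simp add: power_mult power2_eq_square)
    also have "\<dots> = 1" using two_hq K_pow_q1 y by simp
    finally show "b \<in> {x. poly P x = 0}" using pe by simp
  qed
  have "sqK = {x. poly P x = 0}"
    using card_subset_eq[OF _ sub] cb card_sqK' card_mono[OF _ sub] by simp
  thus ?thesis using pe by auto
qed

lemma pow_hq_pm1: "a \<in> K - {0} \<Longrightarrow> a ^ hq = 1 \<or> a ^ hq = -1"
proof -
  assume a: "a \<in> K - {0}"
  have "(a ^ hq) * (a ^ hq) = 1" using K_pow_q1[of a] a two_hq
    by (metis DiffE insertCI mult_2 power_add)
  hence "(a ^ hq - 1) * (a ^ hq + 1) = 0" by (simp add: algebra_simps)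
  thus ?thesis by (auto simp: add_eq_0_iff2)
qed

lemma euler: "a \<in> K \<Longrightarrow> of_int (eta K a) = a ^ hq"
proof -
  assume a: "a \<in> K"
  show ?thesis
  proof (cases "a = 0")
    case True thus ?thesis using hq_pos by (simp add: eta_def zero_power)
  next
    case False
    hence a': "a \<in> K - {0}" using a by simp
    show ?thesis
    proof (cases "a \<in> sqK")
      case True
      hence "\<exists>y\<in>K. y * y = a" by (simp add: sqK_def)
      thus ?thesis using True sqK_iff[OF a'] False by (simp add: eta_def)
    next
      case nsq: False
      hence "\<not> (\<exists>y\<in>K. y * y = a)" using a' by (auto simp: sqK_def)
      moreover have "a ^ hq = -1" using pow_hq_pm1[OF a'] sqK_iff[OF a'] nsq by auto
      ultimately show ?thesis using False by (simp add: eta_def)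
    qed
  qed
qed

lemma eta_range: "eta K a \<in> {-1, 0, 1}" by (simp add: eta_def)

lemma of_int_pm_inj:
  assumes "x \<in> {-1, 0, 1::int}" "y \<in> {-1, 0, 1::int}" "(of_int x :: 'a) = of_int y"
  shows "x = y"
proof -
  have "(1::'a) \<noteq> - 1"
  proof
    assume "(1::'a) = - 1"
    hence "(1::'a) + 1 = 0" using eq_neg_iff_add_eq_0[of "1::'a" 1] by blast
    thus False using two_nz one_add_one[where 'a='a] by argo
  qed
  thus ?thesis using assms by auto
qed

lemma eta_mult: "a \<in> K \<Longrightarrow> b \<in> K \<Longrightarrow> eta K (a * b) = eta K a * eta K b"
proof -
  assume ab: "a \<in> K" "b \<in> K"
  have "(of_int (eta K (a * b)) :: 'a) = of_int (eta K a * eta K b)"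
    using euler[of "a*b"] euler[of a] euler[of b] ab Kmult by (simp add: power_mult_distrib)
  moreover have "eta K a * eta K b \<in> {-1, 0, 1}" using eta_range[of a] eta_range[of b] by auto
  ultimately show ?thesis using of_int_pm_inj eta_range by blast
qed

lemma eta_sq: "a \<in> K \<Longrightarrow> w \<in> K \<Longrightarrow> w \<noteq> 0 \<Longrightarrow> eta K (w * w * a) = eta K a"
proof -
  assume h: "a \<in> K" "w \<in> K" "w \<noteq> 0"
  have "eta K (w * w) = 1" using h by (auto simp: eta_def)
  thus ?thesis using eta_mult[of "w*w" a] h Kmult by simp
qed

lemma eta_sqr: "eta K (y * y) = (if y = 0 then 0 else 1)" if "y \<in> K"
  using that by (auto simp: eta_def)

lemma eta_minus1: "eta K (-1) = (-1) ^ hq"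
proof -
  have "(of_int (eta K (-1)) :: 'a) = of_int ((-1) ^ hq)" using euler[of "-1"] K1 Kuminus by simp
  moreover have "(-1::int) ^ hq \<in> {-1,0,1}" by (cases "even hq") auto
  ultimately show ?thesis using of_int_pm_inj eta_range by blast
qed

lemma sqK_sub: "sqK \<subseteq> K - {0}" by (auto simp: sqK_def)

lemma sum_eta: "(\<Sum>a\<in>K. eta K a) = 0"
proof -
  have "(\<Sum>a\<in>K. eta K a) = (\<Sum>a\<in>K - {0}. eta K a)"
    using K0 by (subst sum.remove[of K 0]) (auto simp: eta_def)
  also have "\<dots> = (\<Sum>a\<in>sqK. eta K a) + (\<Sum>a\<in>(K - {0}) - sqK. eta K a)"
    using sum.subset_diff[of sqK "K - {0}" "eta K"] sqK_sub by (simp add: add.commute)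
  also have "(\<Sum>a\<in>sqK. eta K a) = (\<Sum>a\<in>sqK. 1)"
    by (rule sum.cong) (auto simp: sqK_def eta_def)
  also have "(\<Sum>a\<in>(K - {0}) - sqK. eta K a) = (\<Sum>a\<in>(K - {0}) - sqK. -1)"
    by (rule sum.cong) (auto simp: sqK_def eta_def)
  also have "card ((K - {0}) - sqK) = card (K - {0}) - card sqK"
    by (rule card_Diff_subset) (auto simp: sqK_def)
  hence "(\<Sum>a\<in>(K - {0}) - sqK. (-1::int)) = - int (q - 1 - hq)"
    using cardK K0 card_sqK' by (simp add: card_Diff_singleton)
  finally show ?thesis using card_sqK' two_hq by simp
qed

lemma sum_shift_K: "c \<in> K \<Longrightarrow> (\<Sum>w\<in>K. f (c - w)) = (\<Sum>w\<in>K. f w)"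
proof -
  assume c: "c \<in> K"
  have bij: "bij_betw (\<lambda>w. c - w) K K"
  proof (rule bij_betw_imageI)
    show "inj_on (\<lambda>w. c - w) K" by (auto simp: inj_on_def)
    show "(\<lambda>w. c - w) ` K = K"
    proof
      show "(\<lambda>w. c - w) ` K \<subseteq> K" using c Kdiff by blast
      show "K \<subseteq> (\<lambda>w. c - w) ` K"
      proof
        fix y assume "y \<in> K"
        hence "c - y \<in> K" using c Kdiff by blast
        moreover have "y = c - (c - y)" by simp
        ultimately show "y \<in> (\<lambda>w. c - w) ` K" by blast
      qed
    qed
  qed
  show ?thesis using sum.reindex_bij_betw[OF bij, of f] by simp
qed

lemma sum_scale_K: "l \<in> K \<Longrightarrow> l \<noteq> 0 \<Longrightarrow> (\<Sum>w\<in>K. f (l * w)) = (\<Sum>w\<in>K. f w)"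
proof -
  assume l: "l \<in> K" "l \<noteq> 0"
  have bij: "bij_betw (\<lambda>w. l * w) K K"
  proof (rule bij_betw_imageI)
    show "inj_on (\<lambda>w. l * w) K" using l by (auto simp: inj_on_def)
    show "(\<lambda>w. l * w) ` K = K"
    proof
      show "(\<lambda>w. l * w) ` K \<subseteq> K" using l Kmult by blast
      show "K \<subseteq> (\<lambda>w. l * w) ` K"
      proof
        fix y assume "y \<in> K"
        hence "y / l \<in> K" using l Kdiv by blast
        moreover have "y = l * (y / l)" using l by simp
        ultimately show "y \<in> (\<lambda>w. l * w) ` K" by blast
      qed
    qed
  qed
  show ?thesis using sum.reindex_bij_betw[OF bij, of f] by simp
qed

lemma count_sq:
  assumes l: "l \<in> K" "l \<noteq> 0" and w: "w \<in> K"
  shows "int (card {u \<in> K. l * u ^ 2 = w}) = 1 + eta K (l * w)"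
proof (cases "w = 0")
  case True
  have "{u \<in> K. l * u ^ 2 = w} = {0}" using True l K0 by auto
  thus ?thesis using True by (simp add: eta_def)
next
  case False
  have wl: "w / l \<in> K" using Kdiv l w by blast
  have e: "eta K (l * w) = eta K (w / l)"
  proof -
    have "l * w = l * l * (w / l)" using l by simp
    thus ?thesis using eta_sq[OF wl l] by simp
  qed
  have set_eq: "{u \<in> K. l * u ^ 2 = w} = {u \<in> K - {0}. u * u = w / l}"
    using l False by (auto simp: power2_eq_square field_simps)
  show ?thesis
  proof (cases "\<exists>y\<in>K. y * y = w / l")
    case True
    then obtain y0 where y0: "y0 \<in> K" "y0 * y0 = w / l" by blast
    have y0nz: "y0 \<noteq> 0" using y0 False l by auto
    have "y0 \<noteq> - y0"
    proof
      assume "y0 = - y0"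
      hence "y0 + y0 = 0" using eq_neg_iff_add_eq_0 by blast
      hence "2 * y0 = 0" using mult_2[of y0] by argo
      thus False using y0nz two_nz by simp
    qed
    hence "card {u \<in> K. l * u ^ 2 = w} = 2" using set_eq sq_fiber[OF y0(1) y0nz] y0(2) by simp
    moreover have "eta K (w / l) = 1" using True False l by (simp add: eta_def)
    ultimately show ?thesis using e by simp
  next
    case nsq: False
    have "{u \<in> K. l * u ^ 2 = w} = {}" using set_eq nsq by auto
    moreover have "eta K (w / l) = -1" using nsq False l by (simp add: eta_def)
    ultimately show ?thesis using e by simp
  qed
qed

lemma fiber_sum_sq:
  assumes l: "l \<in> K" "l \<noteq> 0"
  shows "(\<Sum>u\<in>K. f (l * u ^ 2)) = (\<Sum>w\<in>K. (1 + eta K (l * w)) * (f w :: int))"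
proof -
  have img: "(\<lambda>u. l * u ^ 2) ` K \<subseteq> K" using l Kmult Kpow by blast
  have "(\<Sum>u\<in>K. f (l * u ^ 2)) = (\<Sum>w\<in>K. \<Sum>u\<in>{u. u \<in> K \<and> l * u ^ 2 = w}. f (l * u ^ 2))"
    using sum.group[OF finite finite img, of "\<lambda>u. f (l * u ^ 2)"] by simp
  also have "\<dots> = (\<Sum>w\<in>K. \<Sum>u\<in>{u. u \<in> K \<and> l * u ^ 2 = w}. f w)"
    by (rule sum.cong[OF refl], rule sum.cong) auto
  also have "\<dots> = (\<Sum>w\<in>K. int (card {u \<in> K. l * u ^ 2 = w}) * f w)" by simp
  also have "\<dots> = (\<Sum>w\<in>K. (1 + eta K (l * w)) * f w)"
    by (rule sum.cong[OF refl]) (simp add: count_sq[OF l])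
  finally show ?thesis .
qed

definition Cn :: "nat \<Rightarrow> (nat \<Rightarrow> 'a \<Rightarrow> 'a) \<Rightarrow> 'a \<Rightarrow> nat" where
  "Cn n g c = card {x \<in> {..<n} \<rightarrow>\<^sub>E K. (\<Sum>i<n. g i (x i)) = c}"

lemma Cn_0: "Cn 0 g c = (if c = 0 then 1 else 0)"
  by (simp add: Cn_def)

lemma Cn_Suc: "Cn (Suc n) g c = (\<Sum>u\<in>K. Cn n g (c - g n u))"
proof -
  let ?A = "\<lambda>u. {x \<in> {..<n} \<rightarrow>\<^sub>E K. (\<Sum>i<n. g i (x i)) = c - g n u}"
  let ?up = "\<lambda>u x. x(n := u)"
  have eq: "{x \<in> {..<Suc n} \<rightarrow>\<^sub>E K. (\<Sum>i<Suc n. g i (x i)) = c} = (\<Union>u\<in>K. ?up u ` ?A u)"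
  proof
    show "{x \<in> {..<Suc n} \<rightarrow>\<^sub>E K. (\<Sum>i<Suc n. g i (x i)) = c} \<subseteq> (\<Union>u\<in>K. ?up u ` ?A u)"
    proof
      fix x assume x: "x \<in> {x \<in> {..<Suc n} \<rightarrow>\<^sub>E K. (\<Sum>i<Suc n. g i (x i)) = c}"
      define x' where "x' = x(n := undefined)"
      have xn: "x n \<in> K" using x by auto
      have x'P: "x' \<in> {..<n} \<rightarrow>\<^sub>E K" using x by (auto simp: x'_def PiE_iff extensional_def)
      have "(\<Sum>i<n. g i (x' i)) = (\<Sum>i<n. g i (x i))" by (rule sum.cong) (auto simp: x'_def)
      moreover have "(\<Sum>i<Suc n. g i (x i)) = (\<Sum>i<n. g i (x i)) + g n (x n)" by simp
      ultimately have "(\<Sum>i<n. g i (x' i)) = c - g n (x n)" using x by (simp add: algebra_simps)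
      hence "x' \<in> ?A (x n)" using x'P by simp
      moreover have "x = ?up (x n) x'" by (simp add: x'_def)
      ultimately show "x \<in> (\<Union>u\<in>K. ?up u ` ?A u)" using xn by blast
    qed
    show "(\<Union>u\<in>K. ?up u ` ?A u) \<subseteq> {x \<in> {..<Suc n} \<rightarrow>\<^sub>E K. (\<Sum>i<Suc n. g i (x i)) = c}"
    proof
      fix y assume "y \<in> (\<Union>u\<in>K. ?up u ` ?A u)"
      then obtain u x where u: "u \<in> K" and x: "x \<in> ?A u" and y: "y = x(n := u)" by blast
      have "y \<in> {..<Suc n} \<rightarrow>\<^sub>E K" using x u by (auto simp: y PiE_iff extensional_def)
      moreover have "(\<Sum>i<n. g i (y i)) = (\<Sum>i<n. g i (x i))" by (rule sum.cong) (auto simp: y)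
      hence "(\<Sum>i<Suc n. g i (y i)) = c" using x by (simp add: y)
      ultimately show "y \<in> {x \<in> {..<Suc n} \<rightarrow>\<^sub>E K. (\<Sum>i<Suc n. g i (x i)) = c}" by blast
    qed
  qed
  have inj: "inj_on (?up u) (?A u)" for u
  proof (rule inj_onI)
    fix x y assume "x \<in> ?A u" "y \<in> ?A u" "x(n := u) = y(n := u)"
    moreover hence "x n = y n" by (auto simp: PiE_iff extensional_def)
    ultimately show "x = y" by (metis fun_upd_triv fun_upd_upd)
  qed
  have "Cn (Suc n) g c = card (\<Union>u\<in>K. ?up u ` ?A u)" unfolding Cn_def by (rule arg_cong[OF eq])
  also have "\<dots> = (\<Sum>u\<in>K. card (?up u ` ?A u))"
  proof (rule card_UN_disjoint)
    show "\<forall>i\<in>K. \<forall>j\<in>K. i \<noteq> j \<longrightarrow> ?up i ` ?A i \<inter> ?up j ` ?A j = {}"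
    proof (intro ballI impI)
      fix i j :: 'a assume "i \<noteq> j"
      show "?up i ` ?A i \<inter> ?up j ` ?A j = {}"
      proof (rule ccontr)
        assume "?up i ` ?A i \<inter> ?up j ` ?A j \<noteq> {}"
        then obtain x y where "x(n := i) = y(n := j)" by blast
        hence "(x(n := i)) n = (y(n := j)) n" by simp
        thus False using \<open>i \<noteq> j\<close> by simp
      qed
    qed
    show "\<forall>u\<in>K. finite (?up u ` ?A u)"
    proof
      fix u
      have "finite (?A u)" by (rule finite_subset[of _ "{..<n} \<rightarrow>\<^sub>E K"]) (auto intro: finite_PiE)
      thus "finite (?up u ` ?A u)" by blast
    qed
  qed auto
  also have "\<dots> = (\<Sum>u\<in>K. Cn n g (c - g n u))"
    by (rule sum.cong[OF refl]) (simp add: card_image[OF inj] Cn_def)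
  finally show ?thesis .
qed

lemma sum_eta_scaled: "l \<in> K \<Longrightarrow> (\<Sum>w\<in>K. eta K (l * w)) = 0"
proof -
  assume l: "l \<in> K"
  have "(\<Sum>w\<in>K. eta K (l * w)) = (\<Sum>w\<in>K. eta K l * eta K w)"
    by (rule sum.cong[OF refl]) (simp add: eta_mult l)
  also have "\<dots> = eta K l * (\<Sum>w\<in>K. eta K w)" by (simp add: sum_distrib_left)
  finally show ?thesis using sum_eta by simp
qed

lemma jacobi:
  assumes c: "c \<in> K"
  shows "(\<Sum>w\<in>K. eta K (w * (c - w))) = (if c = 0 then (int q - 1) * eta K (-1) else - eta K (-1))"
proof (cases "c = 0")
  case True
  have "(\<Sum>w\<in>K. eta K (w * (c - w))) = (\<Sum>w\<in>K. if w = 0 then 0 else eta K (-1))"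
  proof (rule sum.cong[OF refl])
    fix w assume w: "w \<in> K"
    have "w * (c - w) = w * w * (-1)" using True by simp
    thus "eta K (w * (c - w)) = (if w = 0 then 0 else eta K (-1))"
      using eta_sq[of "-1" w] w K1 Kuminus by (auto simp: eta_def)
  qed
  also have "\<dots> = (\<Sum>w\<in>K - {0}. eta K (-1))"
    using K0 by (subst sum.remove[of K 0]) (auto intro!: sum.cong)
  also have "\<dots> = (int q - 1) * eta K (-1)" using cardK K0 q_pos
    by (simp add: card_Diff_singleton of_nat_diff)
  finally show ?thesis using True by simp
next
  case False
  have "(\<Sum>w\<in>K. eta K (w * (c - w))) = (\<Sum>w\<in>K - {0}. eta K (w * (c - w)))"
    using K0 by (subst sum.remove[of K 0]) (auto simp: eta_def)
  also have "\<dots> = (\<Sum>w\<in>K - {0}. eta K (c / w - 1))"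
  proof (rule sum.cong[OF refl])
    fix w assume w: "w \<in> K - {0}"
    have "w * (c - w) = w * w * (c / w - 1)" using w by (simp add: field_simps)
    moreover have "c / w - 1 \<in> K" using c w Kdiv Kdiff K1 by blast
    ultimately show "eta K (w * (c - w)) = eta K (c / w - 1)" using eta_sq[of "c / w - 1" w] w by (simp add: mult.assoc)
  qed
  also have "\<dots> = (\<Sum>u\<in>K - {-1}. eta K u)"
  proof -
    have bij: "bij_betw (\<lambda>w. c / w - 1) (K - {0}) (K - {-1})"
    proof (rule bij_betw_imageI)
      show "inj_on (\<lambda>w. c / w - 1) (K - {0})" using False by (auto simp: inj_on_def field_simps)
      show "(\<lambda>w. c / w - 1) ` (K - {0}) = K - {-1}"
      proof
        show "(\<lambda>w. c / w - 1) ` (K - {0}) \<subseteq> K - {-1}"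
        proof
          fix u assume "u \<in> (\<lambda>w. c / w - 1) ` (K - {0})"
          then obtain w where w: "w \<in> K - {0}" "u = c / w - 1" by blast
          have "u \<in> K" using w c Kdiv Kdiff K1 by blast
          moreover have "u \<noteq> -1" using w False by auto
          ultimately show "u \<in> K - {-1}" by simp
        qed
        show "K - {-1} \<subseteq> (\<lambda>w. c / w - 1) ` (K - {0})"
        proof
          fix u assume u: "u \<in> K - {-1}"
          hence u1: "u + 1 \<noteq> 0" by (metis DiffD2 add_eq_0_iff2 singletonI)
          define w where "w = c / (u + 1)"
          have "w \<in> K" using u c Kadd K1 Kdiv w_def by blast
          moreover have "w \<noteq> 0" using False u1 by (simp add: w_def)
          moreover have "u = c / w - 1" using False u1 by (simp add: w_def)
          ultimately show "u \<in> (\<lambda>w. c / w - 1) ` (K - {0})" by blast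
        qed
      qed
    qed
    show ?thesis using sum.reindex_bij_betw[OF bij, of "eta K"] by simp
  qed
  also have "\<dots> = - eta K (-1)"
  proof -
    have "-1 \<in> K" using K1 Kuminus by blast
    hence "(\<Sum>u\<in>K. eta K u) = eta K (-1) + (\<Sum>u\<in>K - {-1}. eta K u)"
      by (simp add: sum.remove)
    thus ?thesis using sum_eta by simp
  qed
  finally show ?thesis using False by simp
qed

definition gq :: "nat \<Rightarrow> (nat \<Rightarrow> 'a) \<Rightarrow> nat \<Rightarrow> 'a \<Rightarrow> 'a" where
  "gq r lam = (\<lambda>i u. if i < r then lam i * u ^ 2 else 0)"
definition dl :: "(nat \<Rightarrow> 'a) \<Rightarrow> nat \<Rightarrow> 'a" where
  "dl lam n = (-1) ^ (n div 2) * (\<Prod>i<n. lam i)"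
definition vv :: "'a \<Rightarrow> int" where
  "vv c = (if c = 0 then int q - 1 else -1)"

lemma sumA: "l \<in> K \<Longrightarrow> (\<Sum>w\<in>K. 1 + eta K (l * w)) = int q"
  using sum_eta_scaled[of l] cardK by (simp add: sum.distrib)

lemma sumB:
  assumes l: "l \<in> K" and c: "c \<in> K"
  shows "(\<Sum>w\<in>K. (1 + eta K (l * w)) * vv (c - w)) = int q * eta K (l * c)"
proof -
  have "(\<Sum>w\<in>K. (1 + eta K (l * w)) * vv (c - w))
      = (\<Sum>w\<in>K. (if w = c then int q * (1 + eta K (l * w)) else 0) - (1 + eta K (l * w)))"
    by (rule sum.cong[OF refl]) (auto simp: vv_def algebra_simps)
  also have "\<dots> = int q * (1 + eta K (l * c)) - int q"
    using c sumA[OF l] by (simp add: sum_subtractf sum.delta)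
  finally show ?thesis by (simp add: algebra_simps)
qed

lemma sumC:
  assumes c: "c \<in> K" and d: "d \<in> K"
  shows "(\<Sum>w\<in>K. eta K ((c - w) * d)) = 0"
proof -
  have "(\<Sum>w\<in>K. eta K ((c - w) * d)) = (\<Sum>w\<in>K. eta K (w * d))"
    using sum_shift_K[OF c, of "\<lambda>w. eta K (w * d)"] by simp
  also have "\<dots> = (\<Sum>w\<in>K. eta K (d * w))" by (simp add: mult.commute)
  finally show ?thesis using sum_eta_scaled[OF d] by simp
qed

lemma sumD:
  assumes l: "l \<in> K" and c: "c \<in> K" and d: "d \<in> K"
  shows "(\<Sum>w\<in>K. eta K (l * w) * eta K ((c - w) * d))
       = eta K (l * d) * (if c = 0 then (int q - 1) * eta K (-1) else - eta K (-1))"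
proof -
  have "(\<Sum>w\<in>K. eta K (l * w) * eta K ((c - w) * d)) = (\<Sum>w\<in>K. eta K (l * d) * eta K (w * (c - w)))"
  proof (rule sum.cong[OF refl])
    fix w assume w: "w \<in> K"
    have cw: "c - w \<in> K" using c w Kdiff by blast
    have "eta K (l * w) * eta K ((c - w) * d) = eta K l * eta K w * (eta K (c - w) * eta K d)"
      using eta_mult l w cw d by simp
    also have "\<dots> = (eta K l * eta K d) * (eta K w * eta K (c - w))" by (simp add: algebra_simps)
    also have "\<dots> = eta K (l * d) * eta K (w * (c - w))" using eta_mult l w cw d by simp
    finally show "eta K (l * w) * eta K ((c - w) * d) = eta K (l * d) * eta K (w * (c - w))" .
  qed
  also have "\<dots> = eta K (l * d) * (\<Sum>w\<in>K. eta K (w * (c - w)))" by (simp add: sum_distrib_left)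
  finally show ?thesis using jacobi[OF c] by simp
qed

lemma dl_K: "(\<forall>i<r. lam i \<in> K - {0}) \<Longrightarrow> n \<le> r \<Longrightarrow> dl lam n \<in> K"
  unfolding dl_def using K1 Kuminus Kpow Kmult Kprod[of "{..<n}" lam] by auto

lemma dl_Suc_even: "even n \<Longrightarrow> dl lam (Suc n) = dl lam n * lam n"
  by (simp add: dl_def algebra_simps)

lemma dl_Suc_odd: "odd n \<Longrightarrow> dl lam (Suc n) = - (dl lam n * lam n)"
proof -
  assume "odd n"
  hence "Suc n div 2 = Suc (n div 2)" by presburger
  thus ?thesis by (simp add: dl_def algebra_simps)
qed

lemma eta1: "eta K 1 = 1" using K1 by (auto simp: eta_def intro: bexI[of _ 1])

lemma Cn_rec_sq:
  assumes l: "lam n \<in> K - {0}" and nr: "n < r"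
  shows "int (Cn (Suc n) (gq r lam) c) = (\<Sum>w\<in>K. (1 + eta K (lam n * w)) * int (Cn n (gq r lam) (c - w)))"
proof -
  have "int (Cn (Suc n) (gq r lam) c) = (\<Sum>u\<in>K. int (Cn n (gq r lam) (c - lam n * u ^ 2)))"
    using nr by (simp add: Cn_Suc gq_def)
  also have "\<dots> = (\<Sum>w\<in>K. (1 + eta K (lam n * w)) * int (Cn n (gq r lam) (c - w)))"
    using fiber_sum_sq[of "lam n" "\<lambda>w. int (Cn n (gq r lam) (c - w))"] l by simp
  finally show ?thesis .
qed

lemma qcount:
  assumes lam: "\<forall>i<r. lam i \<in> K - {0}"
  shows "n \<le> r \<Longrightarrow> c \<in> K \<Longrightarrow>
    (even n \<longrightarrow> int q * int (Cn n (gq r lam) c) = int q ^ n + vv c * int q ^ (n div 2) * eta K (dl lam n)) \<and>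
    (odd n \<longrightarrow> int (Cn n (gq r lam) c) = int q ^ (n - 1) + int q ^ (n div 2) * eta K (c * dl lam n))"
proof (induction n arbitrary: c)
  case 0
  have "dl lam 0 = 1" by (simp add: dl_def)
  thus ?case using eta1 by (simp add: Cn_0 vv_def)
next
  case (Suc n)
  have nr: "n < r" and nr': "n \<le> r" using Suc.prems by auto
  have c: "c \<in> K" using Suc.prems by auto
  define l where "l = lam n"
  have l: "l \<in> K" "l \<noteq> 0" using lam nr by (auto simp: l_def)
  define d where "d = dl lam n"
  have d: "d \<in> K" using dl_K[OF lam nr'] by (simp add: d_def)
  define Qh where "Qh = int q ^ (n div 2)"
  have rec: "int (Cn (Suc n) (gq r lam) c) = (\<Sum>w\<in>K. (1 + eta K (l * w)) * int (Cn n (gq r lam) (c - w)))"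
    using Cn_rec_sq[of lam n r c] lam nr by (simp add: l_def)
  show ?case
  proof (cases "even n")
    case True
    have IH: "int q * int (Cn n (gq r lam) (c - w)) = int q ^ n + vv (c - w) * Qh * eta K d" if "w \<in> K" for w
      using Suc.IH[OF nr', of "c - w"] True c that Kdiff by (simp add: Qh_def d_def)
    have "int q * int (Cn (Suc n) (gq r lam) c) = (\<Sum>w\<in>K. (1 + eta K (l * w)) * (int q * int (Cn n (gq r lam) (c - w))))"
      unfolding rec by (simp add: sum_distrib_left algebra_simps)
    also have "\<dots> = (\<Sum>w\<in>K. (1 + eta K (l * w)) * (int q ^ n + vv (c - w) * Qh * eta K d))"
      by (rule sum.cong[OF refl]) (simp add: IH)
    also have "\<dots> = int q ^ n * (\<Sum>w\<in>K. 1 + eta K (l * w)) + Qh * eta K d * (\<Sum>w\<in>K. (1 + eta K (l * w)) * vv (c - w))"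
      by (simp add: sum.distrib sum_distrib_left algebra_simps)
    also have "\<dots> = int q * (int q ^ n + Qh * eta K d * eta K (l * c))"
      using sumA[OF l(1)] sumB[OF l(1) c] by (simp add: algebra_simps)
    finally have "int (Cn (Suc n) (gq r lam) c) = int q ^ n + Qh * eta K d * eta K (l * c)"
      using q_pos by simp
    moreover have "eta K (c * dl lam (Suc n)) = eta K d * eta K (l * c)"
    proof -
      have "c * dl lam (Suc n) = d * (l * c)" using dl_Suc_even[OF True] by (simp add: d_def l_def algebra_simps)
      moreover have "eta K (d * (l * c)) = eta K d * eta K (l * c)" using eta_mult[of d "l * c"] d Kmult[OF l(1) c] by blast
      ultimately show ?thesis by metis
    qed
    moreover have "Suc n div 2 = n div 2" using True by presburger
    ultimately show ?thesis using True by (simp add: Qh_def)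
  next
    case False
    have IH: "int (Cn n (gq r lam) (c - w)) = int q ^ (n - 1) + Qh * eta K ((c - w) * d)" if "w \<in> K" for w
      using Suc.IH[OF nr', of "c - w"] False c that Kdiff by (simp add: Qh_def d_def)
    have "int (Cn (Suc n) (gq r lam) c) = (\<Sum>w\<in>K. (1 + eta K (l * w)) * (int q ^ (n - 1) + Qh * eta K ((c - w) * d)))"
      unfolding rec by (rule sum.cong[OF refl]) (simp add: IH)
    also have "\<dots> = int q ^ (n - 1) * (\<Sum>w\<in>K. 1 + eta K (l * w)) + Qh * (\<Sum>w\<in>K. eta K ((c - w) * d))
        + Qh * (\<Sum>w\<in>K. eta K (l * w) * eta K ((c - w) * d))"
      by (simp add: sum.distrib sum_distrib_left algebra_simps)
    also have "\<dots> = int q ^ n + Qh * (eta K (l * d) * (if c = 0 then (int q - 1) * eta K (-1) else - eta K (-1)))"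
    proof -
      have "int q ^ (n - 1) * int q = int q ^ n" using False
        by (metis odd_pos power_minus_mult)
      thus ?thesis using sumA[OF l(1)] sumC[OF c d] sumD[OF l(1) c d] by (simp add: mult.commute)
    qed
    finally have C: "int (Cn (Suc n) (gq r lam) c) = int q ^ n + Qh * (eta K (l * d) * (if c = 0 then (int q - 1) * eta K (-1) else - eta K (-1)))" .
    have e: "eta K (dl lam (Suc n)) = eta K (-1) * eta K (l * d)"
    proof -
      have "dl lam (Suc n) = (-1) * (l * d)" using dl_Suc_odd[OF False] by (simp add: d_def l_def algebra_simps)
      moreover have "eta K ((-1) * (l * d)) = eta K (-1) * eta K (l * d)"
        using eta_mult[of "-1" "l * d"] K1 Kuminus Kmult[OF l(1) d] by blast
      ultimately show ?thesis by metis
    qed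
    have sd: "Suc n div 2 = Suc (n div 2)" using False by presburger
    have "int q * int (Cn (Suc n) (gq r lam) c) = int q ^ Suc n + vv c * int q ^ (Suc n div 2) * eta K (dl lam (Suc n))"
      unfolding C e sd Qh_def vv_def by (simp add: algebra_simps)
    thus ?thesis using False by simp
  qed
qed

lemma Cn_extra: "r \<le> n \<Longrightarrow> Cn n (gq r lam) c = q ^ (n - r) * Cn r (gq r lam) c"
proof (induction n)
  case 0 thus ?case by simp
next
  case (Suc n)
  show ?case
  proof (cases "r = Suc n")
    case True thus ?thesis by simp
  next
    case False
    hence rn: "r \<le> n" using Suc.prems by simp
    have "Cn (Suc n) (gq r lam) c = (\<Sum>u\<in>K. Cn n (gq r lam) c)"
      using rn by (simp add: Cn_Suc gq_def)
    also have "\<dots> = q * Cn n (gq r lam) c" using cardK by simp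
    finally show ?thesis using Suc.IH[OF rn] rn by (simp add: Suc_diff_le)
  qed
qed

lemma zero_count:
  assumes "r \<le> n"
  shows "card {x \<in> {..<n} \<rightarrow>\<^sub>E K. (\<Sum>i<r. lam i * (x i) ^ 2) = c} = Cn n (gq r lam) c"
proof -
  have "(\<Sum>i<n. gq r lam i (x i)) = (\<Sum>i<r. lam i * (x i) ^ 2)" for x
  proof -
    have "(\<Sum>i<n. gq r lam i (x i)) = (\<Sum>i<r. gq r lam i (x i))"
      using assms by (intro sum.mono_neutral_right) (auto simp: gq_def)
    also have "\<dots> = (\<Sum>i<r. lam i * (x i) ^ 2)" by (simp add: gq_def)
    finally show ?thesis .
  qed
  thus ?thesis by (simp add: Cn_def)
qed

lemma Z_even:
  assumes lam: "\<forall>i<r. lam i \<in> K - {0}" and rn: "r \<le> n" and ev: "even r"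
  shows "int q * int (card {x \<in> {..<n} \<rightarrow>\<^sub>E K. (\<Sum>i<r. lam i * (x i) ^ 2) = 0})
       = int q ^ (n - r) * (int q ^ r + (int q - 1) * int q ^ (r div 2) * eta K (dl lam r))"
proof -
  have "int q * int (Cn r (gq r lam) 0) = int q ^ r + vv 0 * int q ^ (r div 2) * eta K (dl lam r)"
    using qcount[OF lam, of r 0] K0 ev by simp
  moreover have "int q * int (Cn n (gq r lam) 0) = int q ^ (n - r) * (int q * int (Cn r (gq r lam) 0))"
    unfolding Cn_extra[OF rn] by simp
  ultimately show ?thesis unfolding zero_count[OF rn] by (simp add: vv_def)
qed

lemma Z_odd:
  assumes lam: "\<forall>i<r. lam i \<in> K - {0}" and rn: "r \<le> n" and od: "odd r"
  shows "int (card {x \<in> {..<n} \<rightarrow>\<^sub>E K. (\<Sum>i<r. lam i * (x i) ^ 2) = 0})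
       = int q ^ (n - r) * int q ^ (r - 1)"
proof -
  have "int (Cn r (gq r lam) 0) = int q ^ (r - 1)"
    using qcount[OF lam, of r 0] K0 od by (simp add: eta_def)
  thus ?thesis unfolding zero_count[OF rn] Cn_extra[OF rn] by simp
qed

lemma ker_card:
  fixes S :: "'b::ab_group_add set" and f :: "'b \<Rightarrow> 'a" and sm :: "'a \<Rightarrow> 'b \<Rightarrow> 'b"
  assumes fin: "finite S"
    and add: "\<And>u v. u \<in> S \<Longrightarrow> v \<in> S \<Longrightarrow> u + v \<in> S"
    and sub: "\<And>u v. u \<in> S \<Longrightarrow> v \<in> S \<Longrightarrow> u - v \<in> S"
    and smS: "\<And>a u. a \<in> K \<Longrightarrow> u \<in> S \<Longrightarrow> sm a u \<in> S"
    and fadd: "\<And>u v. u \<in> S \<Longrightarrow> v \<in> S \<Longrightarrow> f (u + v) = f u + f v"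
    and fsm: "\<And>a u. a \<in> K \<Longrightarrow> u \<in> S \<Longrightarrow> f (sm a u) = a * f u"
    and fK: "\<And>u. u \<in> S \<Longrightarrow> f u \<in> K"
    and uz: "uz \<in> S" "f uz \<noteq> 0"
  shows "card S = q * card {u \<in> S. f u = 0}"
    and "k \<in> K \<Longrightarrow> card {u \<in> S. f u = k} = card {u \<in> S. f u = 0}"
proof -
  define u1 where "u1 = sm (1 / f uz) uz"
  have ik: "1 / f uz \<in> K" using K1 fK[OF uz(1)] Kdiv by blast
  have u1S: "u1 \<in> S" using smS[OF ik uz(1)] by (simp add: u1_def)
  have fu1: "f u1 = 1" using fsm[OF ik uz(1)] uz(2) by (simp add: u1_def)
  have fsub: "f (u - v) = f u - f v" if "u \<in> S" "v \<in> S" for u v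
  proof -
    have "f u = f ((u - v) + v)" by simp
    also have "\<dots> = f (u - v) + f v" using fadd[OF sub[OF that] that(2)] .
    finally show ?thesis by (simp add: algebra_simps)
  qed
  let ?Z = "{u \<in> S. f u = 0}"
  have fib: "bij_betw (\<lambda>z. z + sm k u1) ?Z {u \<in> S. f u = k}" if k: "k \<in> K" for k
  proof (rule bij_betw_imageI)
    show "inj_on (\<lambda>z. z + sm k u1) ?Z" by (auto simp: inj_on_def)
    show "(\<lambda>z. z + sm k u1) ` ?Z = {u \<in> S. f u = k}"
    proof
      have sk: "sm k u1 \<in> S" using smS[OF k u1S] .
      have fsk: "f (sm k u1) = k" using fsm[OF k u1S] fu1 by simp
      show "(\<lambda>z. z + sm k u1) ` ?Z \<subseteq> {u \<in> S. f u = k}"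
      proof
        fix x assume "x \<in> (\<lambda>z. z + sm k u1) ` ?Z"
        then obtain z where z: "z \<in> S" "f z = 0" "x = z + sm k u1" by blast
        have "x \<in> S" using add[OF z(1) sk] z(3) by simp
        moreover have "f x = k" using fadd[OF z(1) sk] z fsk by simp
        ultimately show "x \<in> {u \<in> S. f u = k}" by simp
      qed
      show "{u \<in> S. f u = k} \<subseteq> (\<lambda>z. z + sm k u1) ` ?Z"
      proof
        fix x assume x: "x \<in> {u \<in> S. f u = k}"
        have "x - sm k u1 \<in> ?Z" using sub[OF _ sk] fsub[OF _ sk] x fsk by simp
        moreover have "x = (x - sm k u1) + sm k u1" by simp
        ultimately show "x \<in> (\<lambda>z. z + sm k u1) ` ?Z" by blast
      qed
    qed
  qed
  show "k \<in> K \<Longrightarrow> card {u \<in> S. f u = k} = card ?Z"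
    using bij_betw_same_card[OF fib] by simp
  have "S = (\<Union>k\<in>K. {u \<in> S. f u = k})" using fK by auto
  hence "card S = card (\<Union>k\<in>K. {u \<in> S. f u = k})" by simp
  also have "\<dots> = (\<Sum>k\<in>K. card {u \<in> S. f u = k})"
    by (rule card_UN_disjoint) (auto intro: finite_subset[OF _ fin])
  also have "\<dots> = (\<Sum>k\<in>K. card ?Z)"
    by (rule sum.cong[OF refl]) (simp add: bij_betw_same_card[OF fib])
  finally show "card S = q * card ?Z" using cardK by simp
qed

definition ksub :: "'a set \<Rightarrow> bool" where
  "ksub W \<longleftrightarrow> 0 \<in> W \<and> (\<forall>x\<in>W. \<forall>y\<in>W. x + y \<in> W) \<and> (\<forall>a\<in>K. \<forall>x\<in>W. a * x \<in> W)"

lemma ksub_0: "ksub W \<Longrightarrow> 0 \<in> W" by (simp add: ksub_def)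
lemma ksub_add: "ksub W \<Longrightarrow> x \<in> W \<Longrightarrow> y \<in> W \<Longrightarrow> x + y \<in> W" by (simp add: ksub_def)
lemma ksub_smul: "ksub W \<Longrightarrow> a \<in> K \<Longrightarrow> x \<in> W \<Longrightarrow> a * x \<in> W" by (simp add: ksub_def)
lemma ksub_diff: "ksub W \<Longrightarrow> x \<in> W \<Longrightarrow> y \<in> W \<Longrightarrow> x - y \<in> W"
proof -
  assume h: "ksub W" "x \<in> W" "y \<in> W"
  have "-1 \<in> K" using K1 Kuminus by blast
  hence "(-1) * y \<in> W" using ksub_smul h by blast
  hence "x + (-1) * y \<in> W" using ksub_add h by blast
  thus ?thesis by simp
qed
lemma ksub_sum: "ksub W \<Longrightarrow> (\<And>i. i \<in> A \<Longrightarrow> f i \<in> W) \<Longrightarrow> sum f A \<in> W"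
  by (induction A rule: infinite_finite_induct) (auto simp: ksub_0 ksub_add)

definition lc :: "(nat \<Rightarrow> 'a) \<Rightarrow> nat \<Rightarrow> (nat \<Rightarrow> 'a) \<Rightarrow> 'a" where
  "lc b n c = (\<Sum>i<n. c i * b i)"

lemma lc_in: "ksub W \<Longrightarrow> (\<And>i. i < n \<Longrightarrow> b i \<in> W) \<Longrightarrow> c \<in> {..<n} \<rightarrow>\<^sub>E K \<Longrightarrow> lc b n c \<in> W"
  unfolding lc_def by (rule ksub_sum) (auto intro: ksub_smul)

lemma card_PiE_K: "card ({..<n} \<rightarrow>\<^sub>E K) = q ^ n"
  using cardK by (simp add: card_PiE)

lemma lc_cong: "(\<And>i. i < n \<Longrightarrow> c i = e i) \<Longrightarrow> lc b n c = lc b n e"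
  unfolding lc_def by (rule sum.cong) auto

lemma bij_from_inj:
  assumes "ksub W" "card W = q ^ n" "\<And>i. i < n \<Longrightarrow> b i \<in> W" "inj_on (lc b n) ({..<n} \<rightarrow>\<^sub>E K)"
  shows "bij_betw (lc b n) ({..<n} \<rightarrow>\<^sub>E K) W"
proof -
  have sub: "lc b n ` ({..<n} \<rightarrow>\<^sub>E K) \<subseteq> W"
  proof
    fix x assume "x \<in> lc b n ` ({..<n} \<rightarrow>\<^sub>E K)"
    then obtain c where "c \<in> {..<n} \<rightarrow>\<^sub>E K" "x = lc b n c" by blast
    thus "x \<in> W" using lc_in[OF assms(1,3)] by simp
  qed
  have "card (lc b n ` ({..<n} \<rightarrow>\<^sub>E K)) = q ^ n" using card_image[OF assms(4)] card_PiE_K by simp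
  hence "card (lc b n ` ({..<n} \<rightarrow>\<^sub>E K)) = card W" using assms(2) by simp
  hence "lc b n ` ({..<n} \<rightarrow>\<^sub>E K) = W" using card_subset_eq[OF finite sub] by blast
  thus ?thesis using assms(4) by (simp add: bij_betw_def)
qed

lemma greedy:
  assumes W: "ksub W" "card W = q ^ d"
  shows "k \<le> d \<Longrightarrow> \<exists>b. (\<forall>i<k. b i \<in> W) \<and> inj_on (lc b k) ({..<k} \<rightarrow>\<^sub>E K)"
proof (induction k)
  case 0
  show ?case by (auto simp: inj_on_def)
next
  case (Suc k)
  then obtain b where b: "\<forall>i<k. b i \<in> W" and inj: "inj_on (lc b k) ({..<k} \<rightarrow>\<^sub>E K)" by auto
  have sub: "lc b k ` ({..<k} \<rightarrow>\<^sub>E K) \<subseteq> W"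
  proof
    fix x assume "x \<in> lc b k ` ({..<k} \<rightarrow>\<^sub>E K)"
    then obtain c where "c \<in> {..<k} \<rightarrow>\<^sub>E K" "x = lc b k c" by blast
    thus "x \<in> W" using lc_in[OF W(1), of k b c] b by simp
  qed
  have "card (lc b k ` ({..<k} \<rightarrow>\<^sub>E K)) = q ^ k" using card_image[OF inj] card_PiE_K by simp
  moreover have "q ^ k < q ^ d" using Suc.prems q_ge3 by (intro power_strict_increasing) auto
  ultimately have "lc b k ` ({..<k} \<rightarrow>\<^sub>E K) \<noteq> W" using W(2) by auto
  then obtain w where w: "w \<in> W" "w \<notin> lc b k ` ({..<k} \<rightarrow>\<^sub>E K)" using sub by blast
  define b' where "b' = b(k := w)"
  have b'W: "\<forall>i<Suc k. b' i \<in> W" using b w by (auto simp: b'_def less_Suc_eq)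
  have lc_split: "lc b' (Suc k) c = lc b k c + c k * w" for c
  proof -
    have "lc b' (Suc k) c = lc b' k c + c k * w" by (simp add: lc_def b'_def)
    moreover have "lc b' k c = lc b k c" unfolding lc_def by (rule sum.cong) (auto simp: b'_def)
    ultimately show ?thesis by simp
  qed
  have "inj_on (lc b' (Suc k)) ({..<Suc k} \<rightarrow>\<^sub>E K)"
  proof (rule inj_onI)
    fix c e assume c: "c \<in> {..<Suc k} \<rightarrow>\<^sub>E K" and e: "e \<in> {..<Suc k} \<rightarrow>\<^sub>E K"
      and eq: "lc b' (Suc k) c = lc b' (Suc k) e"
    have ck: "c k \<in> K" and ek: "e k \<in> K" using c e by auto
    have eq2: "lc b k c + c k * w = lc b k e + e k * w" using eq lc_split by simp
    show "c = e"
    proof (cases "c k = e k")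
      case False
      define h where "h = (\<lambda>i. if i < k then (e i - c i) / (c k - e k) else undefined)"
      have hP: "h \<in> {..<k} \<rightarrow>\<^sub>E K" using c e ck ek Kdiff Kdiv by (auto simp: h_def PiE_iff extensional_def)
      have "lc b k h = (\<Sum>i<k. (e i - c i) * b i) / (c k - e k)"
        unfolding lc_def h_def by (simp add: sum_divide_distrib)
      also have "(\<Sum>i<k. (e i - c i) * b i) = lc b k e - lc b k c"
        unfolding lc_def by (simp add: sum_subtractf algebra_simps)
      also have "lc b k e - lc b k c = (c k - e k) * w" using eq2 by (simp add: algebra_simps)
      finally have "lc b k h = w" using False by simp
      thus ?thesis using w hP by blast
    next
      case True
      hence "lc b k c = lc b k e" using eq2 by simp
      hence "lc b k (c(k := undefined)) = lc b k (e(k := undefined))"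
        by (metis (no_types, lifting) fun_upd_other lc_cong less_irrefl_nat)
      moreover have "c(k := undefined) \<in> {..<k} \<rightarrow>\<^sub>E K" using c by (auto simp: PiE_iff extensional_def)
      moreover have "e(k := undefined) \<in> {..<k} \<rightarrow>\<^sub>E K" using e by (auto simp: PiE_iff extensional_def)
      ultimately have "c(k := undefined) = e(k := undefined)" using inj by (simp add: inj_on_def)
      thus ?thesis using True by (metis fun_upd_triv fun_upd_upd)
    qed
  qed
  thus ?case using b'W by blast
qed

lemma basis_exists:
  assumes W: "ksub W" "card W = q ^ d"
  shows "\<exists>b. (\<forall>i<d. b i \<in> W) \<and> bij_betw (lc b d) ({..<d} \<rightarrow>\<^sub>E K) W"
  using greedy[OF W, of d] bij_from_inj[OF W] by blast

end

locale qf = ff +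
  fixes E :: "'a set" and Q :: "'a \<Rightarrow> 'a"
  assumes sfE: "subfield E" and KE: "K \<subseteq> E" and isq: "is_qform K E Q"
begin

lemma QK: "x \<in> E \<Longrightarrow> Q x \<in> K" using isq by (simp add: is_qform_def)
lemma Qsc: "a \<in> K \<Longrightarrow> x \<in> E \<Longrightarrow> Q (a * x) = a ^ 2 * Q x" using isq by (simp add: is_qform_def)
lemma B1: "a \<in> K \<Longrightarrow> x \<in> E \<Longrightarrow> x' \<in> E \<Longrightarrow> y \<in> E \<Longrightarrow> bform Q (a * x + x') y = a * bform Q x y + bform Q x' y"
  using isq by (simp add: is_qform_def)
lemma B2: "a \<in> K \<Longrightarrow> x \<in> E \<Longrightarrow> y \<in> E \<Longrightarrow> y' \<in> E \<Longrightarrow> bform Q x (a * y + y') = a * bform Q x y + bform Q x y'"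
  using isq by (simp add: is_qform_def)

lemma E0: "0 \<in> E" and Eadd: "x \<in> E \<Longrightarrow> y \<in> E \<Longrightarrow> x + y \<in> E"
  and Emult: "x \<in> E \<Longrightarrow> y \<in> E \<Longrightarrow> x * y \<in> E"
  using subfield_props[OF sfE] by auto

lemma Q0: "Q 0 = 0"
  using Qsc[of 0 0] K0 E0 by simp

lemma bK: "x \<in> E \<Longrightarrow> y \<in> E \<Longrightarrow> bform Q x y \<in> K"
  unfolding bform_def using QK Eadd Kdiff Kdiv K2 by metis

lemma Qadd: "Q (x + y) = Q x + Q y + 2 * bform Q x y"
  unfolding bform_def using two_nz by (simp add: field_simps)

lemma bdiag: "x \<in> E \<Longrightarrow> bform Q x x = Q x"
proof -
  assume x: "x \<in> E"
  have "Q (x + x) = Q (2 * x)" by (simp only: mult_2)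
  also have "\<dots> = 4 * Q x" using Qsc[OF K2 x] by simp
  finally have "Q (x + x) = 4 * Q x" .
  hence "bform Q x x = (4 * Q x - Q x - Q x) / 2" unfolding bform_def by simp
  also have "\<dots> = Q x" using two_nz by (simp add: field_simps)
  finally show ?thesis .
qed

lemma bsym: "bform Q x y = bform Q y x" unfolding bform_def by (simp add: add.commute)

lemma b0r: "bform Q x 0 = 0" unfolding bform_def using Q0 by simp
lemma b0l: "bform Q 0 x = 0" unfolding bform_def using Q0 by simp

lemma b_add2: "x \<in> E \<Longrightarrow> y \<in> E \<Longrightarrow> y' \<in> E \<Longrightarrow> bform Q x (y + y') = bform Q x y + bform Q x y'"
  using B2[OF K1] by simp
lemma b_sm2: "a \<in> K \<Longrightarrow> x \<in> E \<Longrightarrow> y \<in> E \<Longrightarrow> bform Q x (a * y) = a * bform Q x y"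
  using B2[of a x y 0] E0 b0r by simp
lemma b_sm1: "a \<in> K \<Longrightarrow> x \<in> E \<Longrightarrow> y \<in> E \<Longrightarrow> bform Q (a * x) y = a * bform Q x y"
  using B1[of a x 0 y] E0 b0l by simp

lemma ksub_E: "ksub E"
  unfolding ksub_def using E0 Eadd Emult KE by blast

lemma diag_exists:
  "ksub W \<Longrightarrow> W \<subseteq> E \<Longrightarrow> card W = q ^ d \<Longrightarrow>
   \<exists>b s lam. s \<le> d \<and> (\<forall>i<d. b i \<in> W) \<and> bij_betw (lc b d) ({..<d} \<rightarrow>\<^sub>E K) W \<and>
     (\<forall>i<s. lam i \<in> K - {0}) \<and> (\<forall>c\<in>{..<d} \<rightarrow>\<^sub>E K. Q (lc b d c) = (\<Sum>i<s. lam i * (c i) ^ 2))"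
proof (induction d arbitrary: W)
  case 0
  have W0: "W = {0}"
  proof -
    have "card W = 1" using 0 by simp
    then obtain z where "W = {z}" by (auto simp: card_Suc_eq)
    thus ?thesis using ksub_0[OF "0.prems"(1)] by simp
  qed
  have "bij_betw (lc (\<lambda>i. 0) 0) ({..<0} \<rightarrow>\<^sub>E K) W"
    using W0 by (simp add: lc_def bij_betw_def)
  moreover have "\<forall>c\<in>{..<0::nat} \<rightarrow>\<^sub>E K. Q (lc (\<lambda>i. 0) 0 c) = (\<Sum>i<0. lam i * (c i) ^ 2)" for lam
    by (simp add: lc_def Q0)
  ultimately show ?case by blast
next
  case (Suc d)
  note W = Suc.prems
  show ?case
  proof (cases "\<forall>x\<in>W. Q x = 0")
    case True
    obtain b where b: "\<forall>i<Suc d. b i \<in> W" "bij_betw (lc b (Suc d)) ({..<Suc d} \<rightarrow>\<^sub>E K) W"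
      using basis_exists[OF W(1,3)] by blast
    have "\<forall>c\<in>{..<Suc d} \<rightarrow>\<^sub>E K. Q (lc b (Suc d) c) = (\<Sum>i<0. lam i * (c i) ^ 2)" for lam
      using True lc_in[OF W(1)] b(1) by simp
    thus ?thesis using b by blast
  next
    case False
    then obtain e where e: "e \<in> W" "Q e \<noteq> 0" by blast
    have eE: "e \<in> E" using e W(2) by blast
    define W' where "W' = {x \<in> W. bform Q e x = 0}"
    have WE: "x \<in> W \<Longrightarrow> x \<in> E" for x using W(2) by blast
    have kc: "card W = q * card W'"
      unfolding W'_def
    proof (rule ker_card[where sm = "(*)" and uz = e])
      show "finite W" by simp
      show "\<And>u v. u \<in> W \<Longrightarrow> v \<in> W \<Longrightarrow> u + v \<in> W" using ksub_add[OF W(1)] .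
      show "\<And>u v. u \<in> W \<Longrightarrow> v \<in> W \<Longrightarrow> u - v \<in> W" using ksub_diff[OF W(1)] .
      show "\<And>a u. a \<in> K \<Longrightarrow> u \<in> W \<Longrightarrow> a * u \<in> W" using ksub_smul[OF W(1)] .
      show "\<And>u v. u \<in> W \<Longrightarrow> v \<in> W \<Longrightarrow> bform Q e (u + v) = bform Q e u + bform Q e v"
        using b_add2 eE WE by blast
      show "\<And>a u. a \<in> K \<Longrightarrow> u \<in> W \<Longrightarrow> bform Q e (a * u) = a * bform Q e u"
        using b_sm2 eE WE by blast
      show "\<And>u. u \<in> W \<Longrightarrow> bform Q e u \<in> K" using bK eE WE by blast
      show "e \<in> W" by (rule e(1))
      show "bform Q e e \<noteq> 0" using bdiag[OF eE] e(2) by simp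
    qed
    have cW': "card W' = q ^ d" using kc W(3) q_pos by simp
    have W'sub: "ksub W'"
      unfolding ksub_def W'_def
      using ksub_0[OF W(1)] ksub_add[OF W(1)] ksub_smul[OF W(1)] b0r b_add2 b_sm2 eE WE
      by auto
    have W'E: "W' \<subseteq> E" using W(2) by (auto simp: W'_def)
    obtain b' s' lam' where IH: "s' \<le> d" "\<forall>i<d. b' i \<in> W'" "bij_betw (lc b' d) ({..<d} \<rightarrow>\<^sub>E K) W'"
      "\<forall>i<s'. lam' i \<in> K - {0}" "\<forall>c\<in>{..<d} \<rightarrow>\<^sub>E K. Q (lc b' d c) = (\<Sum>i<s'. lam' i * (c i) ^ 2)"
      using Suc.IH[OF W'sub W'E cW'] by blast
    define b where "b = (\<lambda>i. if i = 0 then e else b' (i - 1))"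
    define lam where "lam = (\<lambda>i. if i = 0 then Q e else lam' (i - 1))"
    define sh where "sh = (\<lambda>c::nat \<Rightarrow> 'a. \<lambda>i. if i < d then c (Suc i) else undefined)"
    have shP: "c \<in> {..<Suc d} \<rightarrow>\<^sub>E K \<Longrightarrow> sh c \<in> {..<d} \<rightarrow>\<^sub>E K" for c
      by (auto simp: sh_def PiE_iff extensional_def)
    have lcs: "lc b (Suc d) c = c 0 * e + lc b' d (sh c)" for c
    proof -
      have "lc b (Suc d) c = c 0 * b 0 + (\<Sum>i<d. c (Suc i) * b (Suc i))"
        unfolding lc_def by (rule sum.lessThan_Suc_shift)
      also have "(\<Sum>i<d. c (Suc i) * b (Suc i)) = lc b' d (sh c)"
        unfolding lc_def by (rule sum.cong) (auto simp: b_def sh_def)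
      finally show ?thesis by (simp add: b_def)
    qed
    have bW: "\<forall>i<Suc d. b i \<in> W" using IH(2) e(1) by (auto simp: b_def W'_def)
    have w'W: "c \<in> {..<Suc d} \<rightarrow>\<^sub>E K \<Longrightarrow> lc b' d (sh c) \<in> W'" for c
      using IH(3) shP by (auto simp: bij_betw_def)
    have inj: "inj_on (lc b (Suc d)) ({..<Suc d} \<rightarrow>\<^sub>E K)"
    proof (rule inj_onI)
      fix c c' assume c: "c \<in> {..<Suc d} \<rightarrow>\<^sub>E K" and c': "c' \<in> {..<Suc d} \<rightarrow>\<^sub>E K"
        and eq: "lc b (Suc d) c = lc b (Suc d) c'"
      have c0: "c 0 \<in> K" "c' 0 \<in> K" using c c' by auto
      have w1: "lc b' d (sh c) \<in> W'" and w2: "lc b' d (sh c') \<in> W'" using w'W c c' by auto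
      have w1E: "lc b' d (sh c) \<in> E" and w2E: "lc b' d (sh c') \<in> E" using w1 w2 W'E by auto
      have be: "bform Q e (lc b (Suc d) x) = x 0 * Q e" if "x 0 \<in> K" "lc b' d (sh x) \<in> W'" "lc b' d (sh x) \<in> E" for x
      proof -
        have "bform Q e (lc b (Suc d) x) = bform Q e (x 0 * e + lc b' d (sh x))" by (simp add: lcs)
        also have "\<dots> = x 0 * bform Q e e + bform Q e (lc b' d (sh x))" using B2[OF that(1) eE eE that(3)] .
        also have "\<dots> = x 0 * Q e" using that(2) bdiag[OF eE] by (simp add: W'_def)
        finally show ?thesis .
      qed
      have e1: "bform Q e (lc b (Suc d) c) = c 0 * Q e" using be[of c] c0 w1 w1E by blast
      have e2: "bform Q e (lc b (Suc d) c') = c' 0 * Q e" using be[of c'] c0 w2 w2E by blast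
      have "c 0 * Q e = c' 0 * Q e" using e1 e2 eq by metis
      hence h0: "c 0 = c' 0" using e(2) by simp
      hence "lc b' d (sh c) = lc b' d (sh c')" using eq by (simp add: lcs)
      hence hs: "sh c = sh c'" using IH(3) shP[OF c] shP[OF c'] by (auto simp: bij_betw_def inj_on_def)
      show "c = c'"
      proof
        fix i
        show "c i = c' i"
        proof (cases i)
          case 0 thus ?thesis using h0 by simp
        next
          case (Suc j)
          show ?thesis
          proof (cases "j < d")
            case True
            hence "sh c j = c i" "sh c' j = c' i" by (auto simp: sh_def Suc)
            thus ?thesis using hs by simp
          next
            case False
            hence "i \<notin> {..<Suc d}" using Suc by simp
            thus ?thesis using c c' by (simp add: PiE_def extensional_def)
          qed
        qed
      qed
    qed
    have bij: "bij_betw (lc b (Suc d)) ({..<Suc d} \<rightarrow>\<^sub>E K) W"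
      using bij_from_inj[OF W(1) W(3)] bW inj by blast
    have lamK: "\<forall>i<Suc s'. lam i \<in> K - {0}" using IH(4) QK[OF eE] e(2) by (auto simp: lam_def less_Suc_eq_0_disj)
    have Qf: "\<forall>c\<in>{..<Suc d} \<rightarrow>\<^sub>E K. Q (lc b (Suc d) c) = (\<Sum>i<Suc s'. lam i * (c i) ^ 2)"
    proof
      fix c assume c: "c \<in> {..<Suc d} \<rightarrow>\<^sub>E K"
      have c0: "c 0 \<in> K" using c by auto
      have w: "lc b' d (sh c) \<in> W'" using w'W c by auto
      have wE: "lc b' d (sh c) \<in> E" using w W'E by auto
      have ceE: "c 0 * e \<in> E" using c0 KE eE Emult by blast
      have "Q (lc b (Suc d) c) = Q (c 0 * e) + Q (lc b' d (sh c)) + 2 * bform Q (c 0 * e) (lc b' d (sh c))"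
        by (simp add: lcs Qadd)
      also have "bform Q (c 0 * e) (lc b' d (sh c)) = 0"
        using b_sm1[OF c0 eE wE] w by (simp add: W'_def)
      also have "Q (c 0 * e) = Q e * (c 0) ^ 2" using Qsc[OF c0 eE] by simp
      also have "Q (lc b' d (sh c)) = (\<Sum>i<s'. lam' i * (sh c i) ^ 2)" using IH(5) shP[OF c] by blast
      also have "\<dots> = (\<Sum>i<s'. lam (Suc i) * (c (Suc i)) ^ 2)"
        by (rule sum.cong) (use IH(1) in \<open>auto simp: sh_def lam_def\<close>)
      finally have "Q (lc b (Suc d) c) = Q e * (c 0)^2 + 2 * 0 + (\<Sum>i<s'. lam (Suc i) * (c (Suc i)) ^ 2)"
        by (simp add: algebra_simps)
      moreover have "(\<Sum>i<Suc s'. lam i * (c i) ^ 2) = lam 0 * (c 0) ^ 2 + (\<Sum>i<s'. lam (Suc i) * (c (Suc i)) ^ 2)"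
        by (rule sum.lessThan_Suc_shift)
      ultimately show "Q (lc b (Suc d) c) = (\<Sum>i<Suc s'. lam i * (c i) ^ 2)"
        by (simp add: lam_def mult.commute)
    qed
    show ?thesis
      apply (rule exI[of _ b], rule exI[of _ "Suc s'"], rule exI[of _ lam])
      using IH(1) bW bij lamK Qf by simp
  qed
qed

lemma prod_split_q: "s \<le> n \<Longrightarrow> (\<Prod>i<n. if i < s then 1 else q) = q ^ (n - s)"
proof (induction n)
  case 0 thus ?case by simp
next
  case (Suc n)
  show ?case
  proof (cases "s = Suc n")
    case True
    thus ?thesis by simp
  next
    case False
    hence "s \<le> n" using Suc.prems by simp
    thus ?thesis using Suc.IH by (simp add: Suc_diff_le)
  qed
qed

lemma bij_basis_facts:
  assumes bij: "bij_betw (lc b n) ({..<n} \<rightarrow>\<^sub>E K) E"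
  shows "K_basis K E n b"
proof -
  have "\<forall>c\<in>{..<n} \<rightarrow>\<^sub>E K. lc b n c \<in> E" using bij by (auto simp: bij_betw_def)
  moreover have "\<forall>x\<in>E. \<exists>!c. c \<in> {..<n} \<rightarrow>\<^sub>E K \<and> x = lc b n c"
  proof
    fix x assume "x \<in> E"
    then obtain c where c: "c \<in> {..<n} \<rightarrow>\<^sub>E K" "x = lc b n c" using bij by (auto simp: bij_betw_def)
    moreover have "c' = c" if "c' \<in> {..<n} \<rightarrow>\<^sub>E K \<and> x = lc b n c'" for c'
      using that c bij by (auto simp: bij_betw_def inj_on_def)
    ultimately show "\<exists>!c. c \<in> {..<n} \<rightarrow>\<^sub>E K \<and> x = lc b n c" by blast
  qed
  ultimately show ?thesis by (simp add: K_basis_def lc_def)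
qed

lemma basis_bij:
  assumes "K_basis K E n b"
  shows "bij_betw (lc b n) ({..<n} \<rightarrow>\<^sub>E K) E"
proof -
  have A: "\<forall>c\<in>{..<n} \<rightarrow>\<^sub>E K. lc b n c \<in> E" and B: "\<forall>x\<in>E. \<exists>!c. c \<in> {..<n} \<rightarrow>\<^sub>E K \<and> x = lc b n c"
    using assms by (auto simp: K_basis_def lc_def)
  have "inj_on (lc b n) ({..<n} \<rightarrow>\<^sub>E K)"
  proof (rule inj_onI)
    fix c c' assume h: "c \<in> {..<n} \<rightarrow>\<^sub>E K" "c' \<in> {..<n} \<rightarrow>\<^sub>E K" "lc b n c = lc b n c'"
    have "lc b n c \<in> E" using A h(1) by blast
    thus "c = c'" using B h by metis
  qed
  moreover have "lc b n ` ({..<n} \<rightarrow>\<^sub>E K) = E"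
  proof
    show "lc b n ` ({..<n} \<rightarrow>\<^sub>E K) \<subseteq> E" using A by blast
    show "E \<subseteq> lc b n ` ({..<n} \<rightarrow>\<^sub>E K)"
    proof
      fix x assume "x \<in> E"
      then obtain c where "c \<in> {..<n} \<rightarrow>\<^sub>E K" "x = lc b n c" using B by blast
      thus "x \<in> lc b n ` ({..<n} \<rightarrow>\<^sub>E K)" by blast
    qed
  qed
  ultimately show ?thesis by (simp add: bij_betw_def)
qed

lemma rank_of_diag:
  assumes cardE: "card E = q ^ n" and sn: "s \<le> n"
    and bij: "bij_betw (lc b n) ({..<n} \<rightarrow>\<^sub>E K) E"
    and lam: "\<forall>i<s. lam i \<in> K - {0}"
    and Qf: "\<forall>c\<in>{..<n} \<rightarrow>\<^sub>E K. Q (lc b n c) = (\<Sum>i<s. lam i * (c i) ^ 2)"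
  shows "qf_rank K E n Q = s"
proof -
  let ?P = "{..<n} \<rightarrow>\<^sub>E K"
  have lcE: "c \<in> ?P \<Longrightarrow> lc b n c \<in> E" for c using bij by (auto simp: bij_betw_def)
  have inj: "inj_on (lc b n) ?P" using bij by (simp add: bij_betw_def)
  have bf: "bform Q (lc b n c) (lc b n c') = (\<Sum>i<s. lam i * c i * c' i)" if c: "c \<in> ?P" "c' \<in> ?P" for c c'
  proof -
    define cc where "cc = (\<lambda>i. if i < n then c i + c' i else undefined)"
    have ccP: "cc \<in> ?P" using c Kadd by (auto simp: cc_def PiE_iff extensional_def)
    have "lc b n cc = lc b n c + lc b n c'"
      unfolding lc_def cc_def by (simp add: sum.distrib[symmetric] algebra_simps)
    moreover have "Q (lc b n cc) = (\<Sum>i<s. lam i * (cc i) ^ 2)" using Qf ccP by blast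
    moreover have "(\<Sum>i<s. lam i * (cc i) ^ 2) = (\<Sum>i<s. lam i * (c i + c' i) ^ 2)"
      by (rule sum.cong) (use sn in \<open>auto simp: cc_def\<close>)
    ultimately have "Q (lc b n c + lc b n c') = (\<Sum>i<s. lam i * (c i + c' i) ^ 2)" by simp
    also have "\<dots> = (\<Sum>i<s. lam i * (c i) ^ 2) + (\<Sum>i<s. lam i * (c' i) ^ 2) + 2 * (\<Sum>i<s. lam i * c i * c' i)"
      by (simp add: power2_sum sum.distrib sum_distrib_left algebra_simps)
    finally show ?thesis using Qf c two_nz unfolding bform_def by simp
  qed
  define Z where "Z = {c \<in> ?P. \<forall>i<s. c i = 0}"
  have rad: "qf_radical E Q = lc b n ` Z"
  proof
    show "qf_radical E Q \<subseteq> lc b n ` Z"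
    proof
      fix x assume x: "x \<in> qf_radical E Q"
      hence "x \<in> E" by (simp add: qf_radical_def)
      then obtain c where c: "c \<in> ?P" "x = lc b n c" using bij by (auto simp: bij_betw_def)
      have "c j = 0" if j: "j < s" for j
      proof -
        define ej :: "nat \<Rightarrow> 'a" where "ej = (\<lambda>i. if i < n then (if i = j then 1 else 0) else undefined)"
        have ejP: "ej \<in> ?P" using K0 K1 by (auto simp: ej_def PiE_iff extensional_def)
        have "bform Q x (lc b n ej) = 0" using x lcE[OF ejP] by (simp add: qf_radical_def)
        moreover have "bform Q x (lc b n ej) = (\<Sum>i<s. if i = j then lam i * c i else 0)"
          unfolding c(2) bf[OF c(1) ejP] by (rule sum.cong) (use j sn in \<open>auto simp: ej_def\<close>)
        moreover have "(\<Sum>i<s. if i = j then lam i * c i else 0) = lam j * c j" using j by simp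
        ultimately show ?thesis using lam j by simp
      qed
      thus "x \<in> lc b n ` Z" using c by (auto simp: Z_def)
    qed
    show "lc b n ` Z \<subseteq> qf_radical E Q"
    proof
      fix x assume "x \<in> lc b n ` Z"
      then obtain c where c: "c \<in> ?P" "\<forall>i<s. c i = 0" "x = lc b n c" by (auto simp: Z_def)
      have "bform Q x y = 0" if y: "y \<in> E" for y
      proof -
        obtain c' where c': "c' \<in> ?P" "y = lc b n c'" using bij y by (auto simp: bij_betw_def)
        show ?thesis unfolding c(3) c'(2) bf[OF c(1) c'(1)] using c(2) by simp
      qed
      thus "x \<in> qf_radical E Q" using lcE[OF c(1)] c(3) by (simp add: qf_radical_def)
    qed
  qed
  have "Z = PiE {..<n} (\<lambda>i. if i < s then {0} else K)"
  proof (rule set_eqI)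
    fix c
    show "c \<in> Z \<longleftrightarrow> c \<in> PiE {..<n} (\<lambda>i. if i < s then {0} else K)"
    proof
      assume "c \<in> Z"
      hence h: "c \<in> ?P" "\<forall>i<s. c i = 0" by (auto simp: Z_def)
      show "c \<in> PiE {..<n} (\<lambda>i. if i < s then {0} else K)"
        unfolding PiE_iff
      proof
        show "\<forall>i\<in>{..<n}. c i \<in> (if i < s then {0} else K)" using h by auto
        show "c \<in> extensional {..<n}" using h(1) by (simp add: PiE_iff)
      qed
    next
      assume h: "c \<in> PiE {..<n} (\<lambda>i. if i < s then {0} else K)"
      have "c \<in> ?P" unfolding PiE_iff
      proof
        show "\<forall>i\<in>{..<n}. c i \<in> K"
        proof
          fix i assume "i \<in> {..<n}"
          hence "c i \<in> (if i < s then {0} else K)" using h by (simp add: PiE_iff)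
          thus "c i \<in> K" using K0 by (cases "i < s") auto
        qed
        show "c \<in> extensional {..<n}" using h by (simp add: PiE_iff)
      qed
      moreover have "\<forall>i<s. c i = 0"
      proof (intro allI impI)
        fix i assume "i < s"
        hence "i \<in> {..<n}" using sn by simp
        hence "c i \<in> (if i < s then {0} else K)" using h by (simp add: PiE_iff)
        thus "c i = 0" using \<open>i < s\<close> by simp
      qed
      ultimately show "c \<in> Z" by (simp add: Z_def)
    qed
  qed
  moreover have "(\<Prod>i<n. card (if i < s then {0} else K)) = (\<Prod>i<n. if i < s then 1 else q)"
    by (rule prod.cong) (auto simp: cardK)
  ultimately have cZ: "card Z = q ^ (n - s)"
    using prod_split_q[OF sn] by (simp add: card_PiE)
  have "card (qf_radical E Q) = q ^ (n - s)"
    unfolding rad using card_image[OF inj_on_subset[OF inj]] cZ by (simp add: Z_def)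
  hence "dimK K (qf_radical E Q) = n - s"
    unfolding dimK_def cardK
  proof -
    assume h: "card (qf_radical E Q) = q ^ (n - s)"
    show "(THE d. card (qf_radical E Q) = q ^ d) = n - s"
    proof (rule the_equality)
      show "card (qf_radical E Q) = q ^ (n - s)" by (rule h)
      show "\<And>d. card (qf_radical E Q) = q ^ d \<Longrightarrow> d = n - s"
      proof -
        fix d assume "card (qf_radical E Q) = q ^ d"
        hence "q ^ d = q ^ (n - s)" using h by simp
        moreover have "1 < q" using q_ge3 by simp
        ultimately show "d = n - s" using power_inject_exp by blast
      qed
    qed
  qed
  thus ?thesis unfolding qf_rank_def using sn by simp
qed

lemma card_bij_filter:
  assumes "bij_betw f A B"
  shows "card {x \<in> B. P x} = card {a \<in> A. P (f a)}"
proof -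
  have "{x \<in> B. P x} = f ` {a \<in> A. P (f a)}" using assms by (auto simp: bij_betw_def)
  moreover have "inj_on f {a \<in> A. P (f a)}" using assms by (auto simp: bij_betw_def inj_on_def)
  ultimately show ?thesis by (simp add: card_image)
qed

lemma Zcount:
  assumes cardE: "card E = q ^ n"
  shows "even (qf_rank K E n Q) \<Longrightarrow> int q * int (card {x \<in> E. Q x = 0})
     = int q ^ (n - qf_rank K E n Q) * (int q ^ qf_rank K E n Q + (int q - 1) * int q ^ (qf_rank K E n Q div 2)
        * eta K ((-1) ^ (qf_rank K E n Q div 2) * qf_Delta K E n Q))"
    and "odd (qf_rank K E n Q) \<Longrightarrow> card {x \<in> E. Q x = 0} = q ^ (n - 1)"
proof -
  define rQ where "rQ = qf_rank K E n Q"
  obtain b s lam where d: "s \<le> n" "\<forall>i<n. b i \<in> E" "bij_betw (lc b n) ({..<n} \<rightarrow>\<^sub>E K) E"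
    "\<forall>i<s. lam i \<in> K - {0}" "\<forall>c\<in>{..<n} \<rightarrow>\<^sub>E K. Q (lc b n c) = (\<Sum>i<s. lam i * (c i) ^ 2)"
    using diag_exists[OF ksub_E subset_refl cardE] by blast
  have rs: "rQ = s" unfolding rQ_def using rank_of_diag[OF cardE d(1) d(3) d(4) d(5)] .
  have "qf_diag K E n Q rQ lam b"
    unfolding qf_diag_def using bij_basis_facts[OF d(3)] d(4) d(5) rs by (simp add: lc_def)
  hence ex: "\<exists>lam b. qf_diag K E n Q rQ lam b" by blast
  define lam0 where "lam0 = (SOME lam. \<exists>b. qf_diag K E n Q rQ lam b)"
  obtain b0 where d0: "qf_diag K E n Q rQ lam0 b0"
    using someI_ex[OF ex] unfolding lam0_def by blast
  have Delta: "qf_Delta K E n Q = (\<Prod>i<rQ. lam0 i)"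
    unfolding qf_Delta_def Let_def rQ_def[symmetric] lam0_def ..
  have bij0: "bij_betw (lc b0 n) ({..<n} \<rightarrow>\<^sub>E K) E" using d0 basis_bij by (simp add: qf_diag_def)
  have lam0K: "\<forall>i<rQ. lam0 i \<in> K - {0}" using d0 by (simp add: qf_diag_def)
  have Q0f: "\<forall>c\<in>{..<n} \<rightarrow>\<^sub>E K. Q (lc b0 n c) = (\<Sum>i<rQ. lam0 i * (c i) ^ 2)"
    using d0 by (simp add: qf_diag_def lc_def)
  have rn: "rQ \<le> n" unfolding rQ_def qf_rank_def by simp
  have Zeq: "card {x \<in> E. Q x = 0} = card {c \<in> {..<n} \<rightarrow>\<^sub>E K. (\<Sum>i<rQ. lam0 i * (c i) ^ 2) = 0}"
  proof -
    have "card {x \<in> E. Q x = 0} = card {c \<in> {..<n} \<rightarrow>\<^sub>E K. Q (lc b0 n c) = 0}"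
      by (rule card_bij_filter[OF bij0])
    also have "{c \<in> {..<n} \<rightarrow>\<^sub>E K. Q (lc b0 n c) = 0} = {c \<in> {..<n} \<rightarrow>\<^sub>E K. (\<Sum>i<rQ. lam0 i * (c i) ^ 2) = 0}"
      using Q0f by auto
    finally show ?thesis .
  qed
  show "even (qf_rank K E n Q) \<Longrightarrow> int q * int (card {x \<in> E. Q x = 0})
     = int q ^ (n - qf_rank K E n Q) * (int q ^ qf_rank K E n Q + (int q - 1) * int q ^ (qf_rank K E n Q div 2)
        * eta K ((-1) ^ (qf_rank K E n Q div 2) * qf_Delta K E n Q))"
    unfolding rQ_def[symmetric] Zeq Delta using Z_even[OF lam0K rn] by (simp add: dl_def)
  show "odd (qf_rank K E n Q) \<Longrightarrow> card {x \<in> E. Q x = 0} = q ^ (n - 1)"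
  proof -
    assume "odd (qf_rank K E n Q)"
    hence od: "odd rQ" by (simp add: rQ_def)
    hence "int (card {x \<in> E. Q x = 0}) = int q ^ (n - rQ) * int q ^ (rQ - 1)"
      unfolding Zeq using Z_odd[OF lam0K rn] by simp
    also have "\<dots> = int q ^ (n - 1)"
    proof -
      have "n - rQ + (rQ - 1) = n - 1" using rn od by (cases rQ) auto
      thus ?thesis by (metis power_add)
    qed
    finally show ?thesis by (simp flip: of_nat_power)
  qed
qed

end

locale tr = ff +
  fixes E2 :: "'a set" and n2 :: nat
  assumes sfE2: "subfield E2" and KE2: "K \<subseteq> E2" and cardE2: "card E2 = q ^ n2" and n2pos: "n2 \<ge> 1"
begin

abbreviation T :: "'a \<Rightarrow> 'a" where "T \<equiv> trace q n2"

lemma E2mult: "x \<in> E2 \<Longrightarrow> y \<in> E2 \<Longrightarrow> x * y \<in> E2" using subfield_props[OF sfE2] by blast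
lemma E2div: "x \<in> E2 \<Longrightarrow> y \<in> E2 \<Longrightarrow> x / y \<in> E2" using subfield_divide[OF sfE2] by blast
lemma E2add: "x \<in> E2 \<Longrightarrow> y \<in> E2 \<Longrightarrow> x + y \<in> E2" using subfield_props[OF sfE2] by blast
lemma E2diff: "x \<in> E2 \<Longrightarrow> y \<in> E2 \<Longrightarrow> x - y \<in> E2" using subfield_diff[OF sfE2] by blast
lemma E20: "0 \<in> E2" using subfield_props[OF sfE2] by blast

lemma T_add: "T (x + y) = T x + T y"
  unfolding trace_def sum.distrib[symmetric] by (rule sum.cong[OF refl]) (rule frob_add)

lemma T_0: "T 0 = 0"
proof -
  have "T 0 + T 0 = T 0 + 0" using T_add[of 0 0] by simp
  thus ?thesis by (rule add_left_imp_eq)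
qed

lemma T_sm: "c \<in> K \<Longrightarrow> T (c * z) = c * T z"
  unfolding trace_def by (simp add: power_mult_distrib K_powqi sum_distrib_left)

lemma E2_pow: "z \<in> E2 \<Longrightarrow> z ^ (q ^ n2) = z"
  using subfield_pow_card[OF sfE2] cardE2 by metis

lemma T_K: "z \<in> E2 \<Longrightarrow> T z \<in> K"
proof -
  assume z: "z \<in> E2"
  define f where "f = (\<lambda>i. z ^ (q ^ i))"
  have "(T z) ^ q = (\<Sum>i<n2. f i ^ q)"
    using frob_sum[of f "{..<n2}" 1] by (simp add: trace_def f_def)
  also have "\<dots> = (\<Sum>i<n2. f (Suc i))"
    by (rule sum.cong) (auto simp: f_def power_mult[symmetric] mult.commute)
  also have "\<dots> = (\<Sum>i<n2. f i)"
  proof -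
    have "(\<Sum>i<Suc n2. f i) = f 0 + (\<Sum>i<n2. f (Suc i))" by (rule sum.lessThan_Suc_shift)
    moreover have "(\<Sum>i<Suc n2. f i) = (\<Sum>i<n2. f i) + f n2" by simp
    moreover have "f n2 = f 0" using E2_pow[OF z] by (simp add: f_def)
    ultimately show ?thesis by simp
  qed
  finally have "(T z) ^ q = T z" by (simp add: trace_def f_def)
  thus ?thesis by (rule roots_in_K)
qed

lemma T_nz: "\<exists>z\<in>E2. T z \<noteq> 0"
proof (rule ccontr)
  assume "\<not> (\<exists>z\<in>E2. T z \<noteq> 0)"
  hence all0: "\<forall>z\<in>E2. T z = 0" by blast
  define P :: "'a poly" where "P = (\<Sum>i<n2. monom 1 (q ^ i))"
  have pe: "poly P x = T x" for x by (simp add: P_def poly_sum poly_monom trace_def)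
  have q1: "1 < q" using q_ge3 by simp
  have cP: "coeff P j = (\<Sum>i<n2. if q ^ i = j then 1 else 0)" for j
    by (simp add: P_def coeff_sum coeff_monom)
  have "coeff P (q ^ (n2 - 1)) = 1"
  proof -
    have "(\<Sum>i<n2. if q ^ i = q ^ (n2 - 1) then (1::'a) else 0) = (\<Sum>i<n2. if i = n2 - 1 then 1 else 0)"
      by (rule sum.cong) (use q1 power_inject_exp in auto)
    also have "\<dots> = 1" using n2pos by simp
    finally show ?thesis by (simp add: cP)
  qed
  hence Pnz: "P \<noteq> 0" by auto
  have "degree P \<le> q ^ (n2 - 1)"
  proof (rule degree_le, intro allI impI)
    fix j assume j: "q ^ (n2 - 1) < j"
    have "q ^ i \<noteq> j" if "i < n2" for i
    proof -
      have "q ^ i \<le> q ^ (n2 - 1)" using that q1 by (intro power_increasing) auto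
      thus ?thesis using j by simp
    qed
    thus "coeff P j = 0" by (simp add: cP)
  qed
  hence cb: "card {x. poly P x = 0} \<le> q ^ (n2 - 1)" using card_poly_roots_bound[OF Pnz] by linarith
  have "E2 \<subseteq> {x. poly P x = 0}" using all0 pe by auto
  hence "card E2 \<le> q ^ (n2 - 1)" using cb card_mono[of "{x. poly P x = 0}" E2] by simp
  moreover have "q ^ (n2 - 1) < q ^ n2" using q1 n2pos by (intro power_strict_increasing) auto
  ultimately show False using cardE2 by simp
qed

definition pr :: "'a \<times> 'a \<Rightarrow> 'a \<times> 'a \<Rightarrow> 'a" where
  "pr u v = fst u * fst v + T (snd u * snd v)"

definition smp :: "'a \<Rightarrow> 'a \<times> 'a \<Rightarrow> 'a \<times> 'a" where
  "smp c u = (c * fst u, c * snd u)"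

abbreviation V where "V \<equiv> K \<times> E2"

lemma pr_sym: "pr u v = pr v u" by (simp add: pr_def mult.commute)

lemma pr_add1: "pr (u + u') v = pr u v + pr u' v"
  by (simp add: pr_def algebra_simps T_add[symmetric])

lemma pr_sm1: "c \<in> K \<Longrightarrow> pr (smp c u) v = c * pr u v"
proof -
  assume c: "c \<in> K"
  have "T (c * snd u * snd v) = c * T (snd u * snd v)" using T_sm[OF c, of "snd u * snd v"] by (simp add: mult.assoc)
  thus ?thesis by (simp add: pr_def smp_def algebra_simps)
qed

lemma pr_K: "u \<in> V \<Longrightarrow> v \<in> V \<Longrightarrow> pr u v \<in> K"
  unfolding pr_def using Kmult Kadd T_K E2mult by (metis mem_Times_iff)

lemma V_add: "u \<in> V \<Longrightarrow> v \<in> V \<Longrightarrow> u + v \<in> V"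
  using Kadd E2add by (auto simp: mem_Times_iff)
lemma V_diff: "u \<in> V \<Longrightarrow> v \<in> V \<Longrightarrow> u - v \<in> V"
  using Kdiff E2diff by (auto simp: mem_Times_iff)
lemma V_sm: "c \<in> K \<Longrightarrow> u \<in> V \<Longrightarrow> smp c u \<in> V"
  using Kmult E2mult KE2 by (auto simp: mem_Times_iff smp_def)

lemma card_V: "card V = q ^ Suc n2"
  using cardK cardE2 by (simp add: card_cartesian_product)

lemma nondeg: "w \<in> V \<Longrightarrow> w \<noteq> 0 \<Longrightarrow> \<exists>v\<in>V. pr w v \<noteq> 0"
proof -
  assume w: "w \<in> V" "w \<noteq> 0"
  show ?thesis
  proof (cases "snd w = 0")
    case False
    obtain z where z: "z \<in> E2" "T z \<noteq> 0" using T_nz by blast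
    have "snd w \<in> E2" using w by auto
    hence "z / snd w \<in> E2" using z E2div by blast
    hence "(0, z / snd w) \<in> V" using K0 by simp
    moreover have "pr w (0, z / snd w) = T z" using False by (simp add: pr_def)
    ultimately show ?thesis using z by metis
  next
    case True
    hence "fst w \<noteq> 0" using w(2) by (metis prod.collapse zero_prod_def)
    moreover have "(1, 0) \<in> V" using K1 E20 by simp
    moreover have "pr w (1, 0) = fst w" using True by (simp add: pr_def T_0)
    ultimately show ?thesis by metis
  qed
qed

definition psub :: "('a \<times> 'a) set \<Rightarrow> bool" where
  "psub W \<longleftrightarrow> W \<subseteq> V \<and> 0 \<in> W \<and> (\<forall>u\<in>W. \<forall>v\<in>W. u + v \<in> W) \<and> (\<forall>c\<in>K. \<forall>u\<in>W. smp c u \<in> W)"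

lemma psub_from_pair: "K_subspace_pair K E2 H \<Longrightarrow> psub H"
  unfolding K_subspace_pair_def psub_def smp_def by (simp add: zero_prod_def plus_prod_def)

lemma psub_diff: "psub W \<Longrightarrow> u \<in> W \<Longrightarrow> v \<in> W \<Longrightarrow> u - v \<in> W"
proof -
  assume h: "psub W" "u \<in> W" "v \<in> W"
  have "-1 \<in> K" using K1 Kuminus by blast
  hence "smp (-1) v \<in> W" using h by (simp add: psub_def)
  hence "u + smp (-1) v \<in> W" using h by (simp add: psub_def)
  moreover have "u + smp (-1) v = u - v" by (simp add: smp_def prod_eq_iff)
  ultimately show ?thesis by simp
qed

lemma pr_add2: "pr w (u + v) = pr w u + pr w v"
  using pr_add1 pr_sym by metis
lemma pr_sm2: "c \<in> K \<Longrightarrow> pr w (smp c u) = c * pr w u"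
  using pr_sm1 pr_sym by metis
lemma pr_0: "pr w 0 = 0" by (simp add: pr_def T_0)
lemma pr_0l: "pr 0 w = 0" by (simp add: pr_def T_0)

definition perp :: "('a \<times> 'a) set \<Rightarrow> ('a \<times> 'a) set" where
  "perp W = {v \<in> V. \<forall>w\<in>W. pr w v = 0}"

lemma psub_V: "psub V"
  unfolding psub_def using V_add V_sm K0 E20 by (auto simp: zero_prod_def)

lemma V0: "(0::'a\<times>'a) \<in> V" using K0 E20 by (simp add: zero_prod_def)

lemma psub_perp: "psub (perp W)"
  unfolding psub_def perp_def using V_add V_sm V0 by (auto simp: pr_0 pr_add2 pr_sm2)

lemma card_filter_sum: "finite B \<Longrightarrow> card {v \<in> B. R v} = (\<Sum>v\<in>B. if R v then 1 else 0)"
  by (simp add: sum.If_cases Int_def conj_commute)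

lemma perp_card:
  assumes W: "psub W" "card W = q ^ k"
  shows "card (perp W) * q ^ k = q ^ Suc n2"
proof -
  let ?N = "Suc n2"
  have WV: "W \<subseteq> V" and W0: "0 \<in> W" using W by (auto simp: psub_def)
  have finW: "finite W" by (rule finite_subset[OF WV]) simp
  have finV: "finite V" by simp
  define S1 where "S1 = (\<Sum>w\<in>W. card {v \<in> V. pr w v = 0})"
  define S2 where "S2 = (\<Sum>v\<in>V. card {w \<in> W. pr w v = 0})"
  have S12: "S1 = S2"
  proof -
    have "S1 = (\<Sum>w\<in>W. \<Sum>v\<in>V. if pr w v = 0 then 1 else 0)"
      unfolding S1_def by (rule sum.cong[OF refl]) (simp add: card_filter_sum)
    also have "\<dots> = (\<Sum>v\<in>V. \<Sum>w\<in>W. if pr w v = 0 then 1 else 0)" by (rule sum.swap)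
    also have "\<dots> = S2"
      unfolding S2_def by (rule sum.cong[OF refl]) (simp add: card_filter_sum[OF finW])
    finally show ?thesis .
  qed
  have kerV: "q * card {v \<in> V. pr w v = 0} = q ^ ?N" if w: "w \<in> W" "w \<noteq> 0" for w
  proof -
    have wV: "w \<in> V" using w WV by blast
    obtain v0 where v0: "v0 \<in> V" "pr w v0 \<noteq> 0" using nondeg[OF wV w(2)] by blast
    have "card V = q * card {v \<in> V. pr w v = 0}"
    proof (rule ker_card[where sm = smp and uz = v0])
      show "finite V" by simp
      show "\<And>u v. u \<in> V \<Longrightarrow> v \<in> V \<Longrightarrow> u + v \<in> V" by (rule V_add)
      show "\<And>u v. u \<in> V \<Longrightarrow> v \<in> V \<Longrightarrow> u - v \<in> V" by (rule V_diff)
      show "\<And>a u. a \<in> K \<Longrightarrow> u \<in> V \<Longrightarrow> smp a u \<in> V" by (rule V_sm)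
      show "\<And>u v. u \<in> V \<Longrightarrow> v \<in> V \<Longrightarrow> pr w (u + v) = pr w u + pr w v" by (rule pr_add2)
      show "\<And>a u. a \<in> K \<Longrightarrow> u \<in> V \<Longrightarrow> pr w (smp a u) = a * pr w u" by (rule pr_sm2)
      show "\<And>u. u \<in> V \<Longrightarrow> pr w u \<in> K" using pr_K[OF wV] .
    qed (use v0 in auto)
    thus ?thesis using card_V by metis
  qed
  have kerW: "q * card {w \<in> W. pr w v = 0} = q ^ k" if v: "v \<in> V" "v \<notin> perp W" for v
  proof -
    obtain w0 where w0: "w0 \<in> W" "pr w0 v \<noteq> 0" using v by (auto simp: perp_def)
    have "card W = q * card {w \<in> W. pr w v = 0}"
    proof (rule ker_card[where sm = smp and uz = w0])
      show "finite W" by (rule finW)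
      show "\<And>u u'. u \<in> W \<Longrightarrow> u' \<in> W \<Longrightarrow> u + u' \<in> W" using W(1) by (simp add: psub_def)
      show "\<And>u u'. u \<in> W \<Longrightarrow> u' \<in> W \<Longrightarrow> u - u' \<in> W" using psub_diff[OF W(1)] .
      show "\<And>a u. a \<in> K \<Longrightarrow> u \<in> W \<Longrightarrow> smp a u \<in> W" using W(1) by (simp add: psub_def)
      show "\<And>u u'. u \<in> W \<Longrightarrow> u' \<in> W \<Longrightarrow> pr (u + u') v = pr u v + pr u' v" by (rule pr_add1)
      show "\<And>a u. a \<in> K \<Longrightarrow> u \<in> W \<Longrightarrow> pr (smp a u) v = a * pr u v" by (rule pr_sm1)
      show "\<And>u. u \<in> W \<Longrightarrow> pr u v \<in> K" using pr_K v(1) WV by blast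
    qed (use w0 in auto)
    thus ?thesis using W(2) by metis
  qed
  have A1: "q * S1 = q * q ^ ?N + (q ^ k - 1) * q ^ ?N"
  proof -
    have "q * S1 = q * card {v \<in> V. pr 0 v = 0} + (\<Sum>w\<in>W - {0}. q * card {v \<in> V. pr w v = 0})"
      unfolding S1_def sum_distrib_left using W0 finW by (simp add: sum.remove)
    also have "(\<Sum>w\<in>W - {0}. q * card {v \<in> V. pr w v = 0}) = (\<Sum>w\<in>W - {0}. q ^ ?N)"
      by (rule sum.cong[OF refl]) (use kerV in auto)
    also have "\<dots> = (q ^ k - 1) * q ^ ?N" using W(2) W0 finW by (simp add: card_Diff_singleton)
    also have "{v \<in> V. pr 0 v = 0} = V" by (simp add: pr_0l)
    finally show ?thesis using card_V by simp
  qed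
  define A where "A = card (perp W)"
  have pV: "perp W \<subseteq> V" by (auto simp: perp_def)
  have A2: "q * S2 = A * (q * q ^ k) + (q ^ ?N - A) * q ^ k"
  proof -
    have "q * S2 = (\<Sum>v\<in>perp W. q * card {w \<in> W. pr w v = 0}) + (\<Sum>v\<in>V - perp W. q * card {w \<in> W. pr w v = 0})"
      unfolding S2_def sum_distrib_left using sum.subset_diff[OF pV finV] by (simp add: add.commute)
    also have "(\<Sum>v\<in>perp W. q * card {w \<in> W. pr w v = 0}) = (\<Sum>v\<in>perp W. q * q ^ k)"
    proof (rule sum.cong[OF refl])
      fix v assume "v \<in> perp W"
      hence "{w \<in> W. pr w v = 0} = W" by (auto simp: perp_def)
      thus "q * card {w \<in> W. pr w v = 0} = q * q ^ k" using W(2) by simp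
    qed
    also have "(\<Sum>v\<in>V - perp W. q * card {w \<in> W. pr w v = 0}) = (\<Sum>v\<in>V - perp W. q ^ k)"
      by (rule sum.cong[OF refl]) (use kerW in auto)
    finally have "q * S2 = (\<Sum>v\<in>perp W. q * q ^ k) + (\<Sum>v\<in>V - perp W. q ^ k)" .
    moreover have "card (V - perp W) = q ^ ?N - A" using card_Diff_subset[OF _ pV] card_V by (simp add: A_def finite_subset[OF pV])
    ultimately show ?thesis by (simp add: A_def)
  qed
  have AN: "A \<le> q ^ ?N" using card_mono[OF finV pV] card_V by (simp add: A_def)
  have k1: "1 \<le> q ^ k" using q_pos by simp
  have "int q * int q ^ ?N + (int q ^ k - 1) * int q ^ ?N = int A * (int q * int q ^ k) + (int q ^ ?N - int A) * int q ^ k"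
  proof -
    have "int (q * q ^ ?N + (q ^ k - 1) * q ^ ?N) = int (A * (q * q ^ k) + (q ^ ?N - A) * q ^ k)"
      using A1 A2 S12 by simp
    thus ?thesis using AN k1 by (simp add: of_nat_diff)
  qed
  hence "(int q - 1) * (int q ^ ?N) = (int q - 1) * (int A * int q ^ k)" by (simp add: algebra_simps)
  hence "int q ^ ?N = int A * int q ^ k" using q_ge3 by simp
  hence "q ^ ?N = A * q ^ k" by (simp flip: of_nat_power of_nat_mult)
  thus ?thesis by (simp add: A_def)
qed

lemma perp_perp:
  assumes W: "psub W" "card W = q ^ k"
  shows "perp (perp W) = W"
proof -
  have WV: "W \<subseteq> V" using W by (simp add: psub_def)
  have sub: "W \<subseteq> perp (perp W)" using WV by (auto simp: perp_def pr_sym)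
  have c1: "card (perp W) * q ^ k = q ^ Suc n2" by (rule perp_card[OF W])
  have "k \<le> Suc n2"
  proof (rule ccontr)
    assume "\<not> k \<le> Suc n2"
    hence "q ^ Suc n2 < q ^ k" using q_ge3 by (intro power_strict_increasing) auto
    moreover have "card (perp W) \<ge> 1"
    proof -
      have "0 \<in> perp W" using psub_perp by (simp add: psub_def)
      thus ?thesis by (metis One_nat_def Suc_leI card_gt_0_iff empty_iff finite)
    qed
    ultimately show False using c1
      by (metis le_less_trans mult_le_mono1 mult_1 not_less order_refl)
  qed
  hence "card (perp W) = q ^ (Suc n2 - k)"
    using c1 q_pos by (metis (no_types, lifting) le_add_diff_inverse2 mult_cancel_right nonzero_mult_div_cancel_left power_add power_not_zero zero_less_iff_neq_zero)
  hence "card (perp (perp W)) * q ^ (Suc n2 - k) = q ^ Suc n2" using perp_card[OF psub_perp] by blast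
  moreover have "q ^ Suc n2 = q ^ k * q ^ (Suc n2 - k)"
    using \<open>k \<le> Suc n2\<close> by (simp add: power_add[symmetric])
  ultimately have "card (perp (perp W)) * q ^ (Suc n2 - k) = q ^ k * q ^ (Suc n2 - k)" by simp
  moreover have "q ^ (Suc n2 - k) \<noteq> 0" using q_pos by simp
  ultimately have "card (perp (perp W)) = q ^ k" using q_pos by auto
  hence "card W = card (perp (perp W))" using W(2) by simp
  thus ?thesis using card_subset_eq[OF _ sub] by (simp add: finite_subset[of _ V])
qed

lemma S_as_perp:
  assumes QK: "\<And>x. x \<in> E1 \<Longrightarrow> Q x \<in> K"
  shows "{(x, y) \<in> E1 \<times> E2. \<forall>(a, b)\<in>H. a * Q x + T (b * y) = 0}
       = Sigma E1 (\<lambda>x. {y \<in> E2. (Q x, y) \<in> perp H})"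
  using QK by (auto simp: perp_def pr_def)

lemma card_S:
  assumes QK: "\<And>x. x \<in> E1 \<Longrightarrow> Q x \<in> K" and fin: "finite E1"
  shows "card {(x, y) \<in> E1 \<times> E2. \<forall>(a, b)\<in>H. a * Q x + T (b * y) = 0}
       = (\<Sum>x\<in>E1. card {y \<in> E2. (Q x, y) \<in> perp H})"
  apply (subst S_as_perp[OF QK], assumption)
  apply (rule card_SigmaI[OF fin])
  apply simp
  done

lemma fiber_perp: "s \<in> K \<Longrightarrow> card {y \<in> E2. (s, y) \<in> perp H} = card {v \<in> perp H. fst v = s}"
proof -
  assume s: "s \<in> K"
  have "bij_betw (\<lambda>y. (s, y)) {y \<in> E2. (s, y) \<in> perp H} {v \<in> perp H. fst v = s}"
    by (rule bij_betw_imageI) (auto simp: inj_on_def perp_def image_def)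
  thus ?thesis by (rule bij_betw_same_card)
qed

lemma caseA:
  assumes H: "psub H" "card H = q ^ r" and h10: "(1, 0) \<in> H"
    and QK: "\<And>x. x \<in> E1 \<Longrightarrow> Q x \<in> K" and fin: "finite E1"
  shows "card {(x, y) \<in> E1 \<times> E2. \<forall>(a, b)\<in>H. a * Q x + T (b * y) = 0}
       = card {x \<in> E1. Q x = 0} * q ^ (Suc n2 - r)"
    and "r \<le> Suc n2"
    and "card {(a, b) \<in> H. b = 0 \<and> a \<noteq> 0} = q - 1"
proof -
  have HV: "H \<subseteq> V" using H by (simp add: psub_def)
  have "card H \<le> card V" using card_mono[OF _ HV] by simp
  hence "q ^ r \<le> q ^ Suc n2" using H(2) card_V by simp
  thus rN: "r \<le> Suc n2" by (rule power_le_imp_le_exp[rotated]) (use q_ge3 in simp)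
  have cp: "card (perp H) * q ^ r = q ^ Suc n2" by (rule perp_card[OF H])
  have cp': "card (perp H) = q ^ (Suc n2 - r)"
  proof -
    have "q ^ Suc n2 = q ^ (Suc n2 - r) * q ^ r" using rN by (simp add: power_add[symmetric])
    thus ?thesis using cp q_pos by simp
  qed
  have fst0: "fst v = 0" if "v \<in> perp H" for v
  proof -
    have "pr (1, 0) v = 0" using that h10 by (simp add: perp_def)
    thus ?thesis by (simp add: pr_def T_0)
  qed
  have F: "card {y \<in> E2. (s, y) \<in> perp H} = (if s = 0 then q ^ (Suc n2 - r) else 0)" if s: "s \<in> K" for s
  proof -
    have "card {y \<in> E2. (s, y) \<in> perp H} = card {v \<in> perp H. fst v = s}" by (rule fiber_perp[OF s])
    also have "{v \<in> perp H. fst v = s} = (if s = 0 then perp H else {})" using fst0 by auto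
    finally show ?thesis using cp' by simp
  qed
  have "card {(x, y) \<in> E1 \<times> E2. \<forall>(a, b)\<in>H. a * Q x + T (b * y) = 0}
      = (\<Sum>x\<in>E1. card {y \<in> E2. (Q x, y) \<in> perp H})" by (rule card_S[OF QK fin])
  also have "\<dots> = (\<Sum>x\<in>E1. if Q x = 0 then q ^ (Suc n2 - r) else 0)"
    by (rule sum.cong[OF refl]) (simp add: F QK)
  also have "\<dots> = card {x \<in> E1. Q x = 0} * q ^ (Suc n2 - r)"
    using fin by (simp add: sum.If_cases Int_def conj_commute)
  finally show "card {(x, y) \<in> E1 \<times> E2. \<forall>(a, b)\<in>H. a * Q x + T (b * y) = 0}
       = card {x \<in> E1. Q x = 0} * q ^ (Suc n2 - r)" .
  have "{(a, b) \<in> H. b = 0 \<and> a \<noteq> 0} = (\<lambda>a. (a, 0::'a)) ` (K - {0})"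
  proof
    show "{(a, b) \<in> H. b = 0 \<and> a \<noteq> 0} \<subseteq> (\<lambda>a. (a, 0::'a)) ` (K - {0})" using HV by auto
    show "(\<lambda>a. (a, 0::'a)) ` (K - {0}) \<subseteq> {(a, b) \<in> H. b = 0 \<and> a \<noteq> 0}"
    proof
      fix u :: "'a \<times> 'a" assume "u \<in> (\<lambda>a. (a, 0::'a)) ` (K - {0})"
      then obtain a where a: "a \<in> K" "a \<noteq> 0" "u = (a, (0::'a))" by blast
      have "smp a (1, 0) \<in> H" using H(1) a h10 by (simp add: psub_def)
      thus "u \<in> {(a, b) \<in> H. b = 0 \<and> a \<noteq> 0}" using a by (simp add: smp_def)
    qed
  qed
  moreover have "card ((\<lambda>a. (a, 0::'a)) ` (K - {0})) = q - 1"
    using cardK K0 by (simp add: card_image inj_on_def card_Diff_singleton)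
  ultimately show "card {(a, b) \<in> H. b = 0 \<and> a \<noteq> 0} = q - 1" by simp
qed

lemma caseB:
  assumes H: "psub H" "card H = q ^ r" and h10: "(1, 0) \<notin> H"
    and QK: "\<And>x. x \<in> E1 \<Longrightarrow> Q x \<in> K" and fin: "finite E1"
  shows "card {(x, y) \<in> E1 \<times> E2. \<forall>(a, b)\<in>H. a * Q x + T (b * y) = 0} * q ^ r
       = card E1 * q ^ n2"
    and "r \<le> n2"
    and "card {(a, b) \<in> H. b = 0 \<and> a \<noteq> 0} = 0"
proof -
  have HV: "H \<subseteq> V" using H by (simp add: psub_def)
  have cp: "card (perp H) * q ^ r = q ^ Suc n2" by (rule perp_card[OF H])
  have pp: "perp (perp H) = H" by (rule perp_perp[OF H])
  have ex: "\<exists>v\<in>perp H. fst v \<noteq> 0"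
  proof (rule ccontr)
    assume "\<not> (\<exists>v\<in>perp H. fst v \<noteq> 0)"
    hence "\<forall>v\<in>perp H. fst v = 0" by blast
    hence "(1, 0) \<in> perp (perp H)" using K1 E20 by (auto simp: perp_def pr_def T_0)
    thus False using pp h10 by simp
  qed
  then obtain v0 where v0: "v0 \<in> perp H" "fst v0 \<noteq> 0" by blast
  have PS: "psub (perp H)" by (rule psub_perp)
  have pV: "perp H \<subseteq> V" using PS by (simp add: psub_def)
  note kc = ker_card[where S = "perp H" and f = fst and sm = smp and uz = v0]
  have kprem: "finite (perp H)"
    "\<And>u v. u \<in> perp H \<Longrightarrow> v \<in> perp H \<Longrightarrow> u + v \<in> perp H"
    "\<And>u v. u \<in> perp H \<Longrightarrow> v \<in> perp H \<Longrightarrow> u - v \<in> perp H"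
    "\<And>a u. a \<in> K \<Longrightarrow> u \<in> perp H \<Longrightarrow> smp a u \<in> perp H"
    "\<And>u v. u \<in> perp H \<Longrightarrow> v \<in> perp H \<Longrightarrow> fst (u + v) = fst u + fst v"
    "\<And>a u. a \<in> K \<Longrightarrow> u \<in> perp H \<Longrightarrow> fst (smp a u) = a * fst u"
    "\<And>u. u \<in> perp H \<Longrightarrow> fst u \<in> K"
    using PS psub_diff[OF PS] pV by (auto simp: psub_def smp_def finite_subset)
  have k1: "card (perp H) = q * card {u \<in> perp H. fst u = 0}"
    by (rule kc(1)[OF kprem v0])
  have k2: "card {u \<in> perp H. fst u = s} = card {u \<in> perp H. fst u = 0}" if "s \<in> K" for s
    by (rule kc(2)[OF kprem v0 that])
  define F0 where "F0 = card {u \<in> perp H. fst u = 0}"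
  have F0eq: "F0 * q ^ r = q ^ n2"
  proof -
    have "q * (F0 * q ^ r) = q * q ^ n2" using cp k1 by (simp add: F0_def algebra_simps)
    thus ?thesis using q_pos by simp
  qed
  have "card {(x, y) \<in> E1 \<times> E2. \<forall>(a, b)\<in>H. a * Q x + T (b * y) = 0}
      = (\<Sum>x\<in>E1. card {y \<in> E2. (Q x, y) \<in> perp H})" by (rule card_S[OF QK fin])
  also have "\<dots> = (\<Sum>x\<in>E1. F0)"
    by (rule sum.cong[OF refl]) (simp add: fiber_perp QK k2 F0_def)
  finally have "card {(x, y) \<in> E1 \<times> E2. \<forall>(a, b)\<in>H. a * Q x + T (b * y) = 0} = (\<Sum>x\<in>E1. F0)" .
  thus "card {(x, y) \<in> E1 \<times> E2. \<forall>(a, b)\<in>H. a * Q x + T (b * y) = 0} * q ^ r = card E1 * q ^ n2"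
    using F0eq by (simp add: mult.assoc)
  have "F0 \<noteq> 0" using F0eq q_pos by (metis mult_is_0 power_not_zero zero_less_iff_neq_zero)
  hence "q ^ r \<le> q ^ n2" using F0eq by (metis le_add2 mult.commute mult_le_mono2 nat_mult_1_right not_less0 Suc_leI less_nat_zero_code neq0_conv One_nat_def)
  thus "r \<le> n2" by (rule power_le_imp_le_exp[rotated]) (use q_ge3 in simp)
  show "card {(a, b) \<in> H. b = 0 \<and> a \<noteq> 0} = 0"
  proof -
    have "{(a, b) \<in> H. b = 0 \<and> a \<noteq> 0} = {}"
    proof (rule ccontr)
      assume "{(a, b) \<in> H. b = 0 \<and> a \<noteq> 0} \<noteq> {}"
      then obtain a where a: "(a, 0) \<in> H" "a \<noteq> 0" by auto
      have aK: "a \<in> K" using a HV by auto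
      hence "1 / a \<in> K" using K1 Kdiv by blast
      hence "smp (1 / a) (a, 0) \<in> H" using H(1) a by (simp add: psub_def)
      thus False using a h10 by (simp add: smp_def)
    qed
    thus ?thesis by simp
  qed
qed

end

lemma (in qf) Delta_K:
  assumes cardE: "card E = q ^ n"
  shows "qf_Delta K E n Q \<in> K"
proof -
  define rQ where "rQ = qf_rank K E n Q"
  obtain b s lam where d: "s \<le> n" "\<forall>i<n. b i \<in> E" "bij_betw (lc b n) ({..<n} \<rightarrow>\<^sub>E K) E"
    "\<forall>i<s. lam i \<in> K - {0}" "\<forall>c\<in>{..<n} \<rightarrow>\<^sub>E K. Q (lc b n c) = (\<Sum>i<s. lam i * (c i) ^ 2)"
    using diag_exists[OF ksub_E subset_refl cardE] by blast
  have rs: "rQ = s" unfolding rQ_def using rank_of_diag[OF cardE d(1) d(3) d(4) d(5)] .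
  have "qf_diag K E n Q rQ lam b"
    unfolding qf_diag_def using bij_basis_facts[OF d(3)] d(4) d(5) rs by (simp add: lc_def)
  hence ex: "\<exists>lam b. qf_diag K E n Q rQ lam b" by blast
  define lam0 where "lam0 = (SOME lam. \<exists>b. qf_diag K E n Q rQ lam b)"
  obtain b0 where d0: "qf_diag K E n Q rQ lam0 b0"
    using someI_ex[OF ex] unfolding lam0_def by blast
  have Delta: "qf_Delta K E n Q = (\<Prod>i<rQ. lam0 i)"
    unfolding qf_Delta_def Let_def rQ_def[symmetric] lam0_def ..
  have "\<forall>i<rQ. lam0 i \<in> K - {0}" using d0 by (simp add: qf_diag_def)
  thus ?thesis unfolding Delta by (intro Kprod) auto
qed

lemma (in ff) eta_pow_minus1:
  assumes d: "d \<in> K"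
  shows "eta K ((-1) ^ j * d) = eta K (-1) ^ j * eta K d"
proof (induction j)
  case 0 thus ?case by simp
next
  case (Suc j)
  have m1: "-1 \<in> K" using K1 Kuminus by blast
  have "(-1) ^ Suc j * d = (-1) * ((-1) ^ j * d)" by simp
  moreover have "(-1) ^ j * d \<in> K" using m1 Kpow Kmult d by blast
  ultimately have "eta K ((-1) ^ Suc j * d) = eta K (-1) * eta K ((-1) ^ j * d)"
    using eta_mult m1 by metis
  thus ?case using Suc.IH by simp
qed

lemma odd_pow_half: "\<exists>h. (2 * a + 1 :: nat) ^ m = 2 * h + 1 \<and> even (h + m * a)"
proof (induction m)
  case 0 thus ?case by (intro exI[of _ 0]) simp
next
  case (Suc m)
  then obtain h where h: "(2 * a + 1) ^ m = 2 * h + 1" "even (h + m * a)" by blast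
  have "(2 * a + 1) ^ Suc m = 2 * (2 * a * h + a + h) + 1" using h(1) by (simp add: algebra_simps)
  moreover have "2 * a * h + a + h + Suc m * a = 2 * (a * h + a) + (h + m * a)" by (simp add: algebra_simps)
  hence "even (2 * a * h + a + h + Suc m * a)" using h(2) by simp
  ultimately show ?case by blast
qed

lemma (in ff) eps_parity:
  assumes ev: "even r"
  shows "(-1::int) ^ (hq * (r div 2)) = (-1) ^ ((p - 1) * m * r div 4)"
proof -
  obtain a where a: "p = 2 * a + 1" using podd by (metis oddE)
  obtain h where h: "p ^ m = 2 * h + 1" "even (h + m * a)" using odd_pow_half[of a m] a by blast
  have "q = 2 * h + 1" using h(1) qdef by simp
  hence hqh: "hq = h" unfolding hq_def by simp
  obtain j where j: "r = 2 * j" using ev by blast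
  have e1: "(p - 1) * m * r div 4 = a * m * j" using a j by simp
  have "even (h * j) = even (a * m * j)" using h(2) by (auto simp: even_add even_mult_iff)
  thus ?thesis unfolding e1 hqh using j by (simp add: minus_one_power_iff)
qed

lemma real_algebra_A:
  fixes X Z A B C e :: real
  assumes X: "X > 0" and B: "B > 0" and ABC: "A * (B * B) = X * C"
    and ZZ: "X * Z = A * (B * B + (X - 1) * B * e)"
  shows "Z = C * (e * (X - 1) / B + 1)"
proof -
  have "X * Z * B = (A * (B * B + (X - 1) * B * e)) * B" using ZZ by simp
  also have "\<dots> = A * (B * B) * B + (X - 1) * e * (A * (B * B))" by (simp add: algebra_simps)
  also have "\<dots> = X * (C * B + (X - 1) * e * C)" using ABC by (simp add: algebra_simps)
  finally have "X * (Z * B) = X * (C * B + (X - 1) * e * C)" by (simp add: algebra_simps)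
  hence "Z * B = C * B + (X - 1) * e * C" using X by (simp only: mult_cancel_left) simp
  thus ?thesis using B by (simp add: field_simps)
qed

theorem lemma5:
  fixes p m m1 m2 r :: nat
    and K E1 E2 :: "'a::{field,finite} set"
    and Q :: "'a \<Rightarrow> 'a"
    and H :: "('a \<times> 'a) set"
  defines "q \<equiv> p ^ m"
  defines "M \<equiv> m1 + m2"
  defines "rQ \<equiv> qf_rank K E1 m1 Q"
  defines "N \<equiv> card {(x, y) \<in> E1 \<times> E2 - {(0, 0)}.
                 \<forall>(a, b)\<in>H. a * Q x + trace q m2 (b * y) = 0}"
  defines "t \<equiv> card {(a, b) \<in> H. b = 0 \<and> a \<noteq> 0}"
  assumes "prime p" and "odd p" and "m \<ge> 1" and "m1 \<ge> 1" and "m2 \<ge> 1"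
    and "subfield K" and "subfield E1" and "subfield E2"
    and "K \<subseteq> E1" and "K \<subseteq> E2"
    and "card K = q" and "card E1 = q ^ m1" and "card E2 = q ^ m2"
    and "is_qform K E1 Q"
    and "K_subspace_pair K E2 H" and "card H = q ^ r"
  shows "(even rQ \<longrightarrow> real N = real q ^ (M - r) *
            (real_of_int (qf_epsilon p m K E1 m1 Q) * real t / real q ^ (rQ div 2) + 1) - 1)
       \<and> (odd rQ \<longrightarrow> real N = real q ^ (M - r) - 1)"
proof -
  note A = assms
  have qdef: "q = p ^ m" by (simp add: \<open>q \<equiv> p ^ m\<close>)
  interpret F: ff K p m q using A qdef by unfold_locales auto
  interpret Q1: qf K p m q E1 Q using A by unfold_locales auto
  interpret T2: tr K p m q E2 m2 using A by unfold_locales auto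
  have psH: "T2.psub H" using T2.psub_from_pair \<open>K_subspace_pair K E2 H\<close> by blast
  define S where "S = {(x, y) \<in> E1 \<times> E2. \<forall>(a, b)\<in>H. a * Q x + trace q m2 (b * y) = 0}"
  have S0: "(0, 0) \<in> S"
    using Q1.Q0 T2.T_0 Q1.E0 T2.E20 by (auto simp: S_def)
  have "{(x, y) \<in> E1 \<times> E2 - {(0, 0)}. \<forall>(a, b)\<in>H. a * Q x + trace q m2 (b * y) = 0} = S - {(0, 0)}"
    by (auto simp: S_def)
  hence Ncard: "N = card S - 1" using \<open>N \<equiv> _\<close> S0 by (simp add: card_Diff_singleton)
  have Spos: "card S \<ge> 1" using S0 by (metis One_nat_def Suc_leI card_gt_0_iff empty_iff finite)
  have realN: "real N = real (card S) - 1" using Ncard Spos by (simp add: of_nat_diff)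
  have QK: "\<And>x. x \<in> E1 \<Longrightarrow> Q x \<in> K" by (rule Q1.QK)
  have finE1: "finite E1" by simp
  have rQm1: "rQ \<le> m1" unfolding \<open>rQ \<equiv> _\<close> qf_rank_def by simp
  have tdef: "t = card {(a, b) \<in> H. b = 0 \<and> a \<noteq> 0}" by (simp add: \<open>t \<equiv> _\<close>)
  have Mdef: "M = m1 + m2" by (simp add: \<open>M \<equiv> _\<close>)
  have rQdef: "rQ = qf_rank K E1 m1 Q" by (simp add: \<open>rQ \<equiv> _\<close>)
  have X0: "real q > 0" using F.q_pos by simp
  show ?thesis
  proof (cases "(1, 0) \<in> H")
    case False
    have cS: "card S * q ^ r = card E1 * q ^ m2" and rm2: "r \<le> m2" and t0: "t = 0"
      using T2.caseB[OF psH \<open>card H = q ^ r\<close> False QK finE1] by (simp_all add: S_def tdef)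
    have "card S * q ^ r = q ^ (M - r) * q ^ r"
      using cS \<open>card E1 = q ^ m1\<close> rm2 Mdef by (simp add: power_add[symmetric])
    hence "card S = q ^ (M - r)" using F.q_pos by simp
    hence "real N = real q ^ (M - r) - 1" using realN by simp
    thus ?thesis using t0 by simp
  next
    case True
    have cS: "card S = card {x \<in> E1. Q x = 0} * q ^ (Suc m2 - r)" and rN: "r \<le> Suc m2" and tq: "t = q - 1"
      using T2.caseA[OF psH \<open>card H = q ^ r\<close> True QK finE1] by (simp_all add: S_def tdef)
    have Mr: "real q ^ (M - r) = real q ^ (m1 - 1) * real q ^ (Suc m2 - r)"
    proof -
      have "M - r = (m1 - 1) + (Suc m2 - r)" using Mdef rN \<open>m1 \<ge> 1\<close> by simp
      thus ?thesis by (simp add: power_add)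
    qed
    show ?thesis
    proof (intro conjI impI)
      assume ev: "even rQ"
      define j where "j = rQ div 2"
      have rj: "rQ = 2 * j" using ev by (simp add: j_def)
      define D where "D = qf_Delta K E1 m1 Q"
      have DK: "D \<in> K" using Q1.Delta_K[OF \<open>card E1 = q ^ m1\<close>] by (simp add: D_def)
      define e where "e = qf_epsilon p m K E1 m1 Q"
      have e_eq: "e = eta K ((-1) ^ j * D)"
      proof -
        have "e = eta K D * (-1) ^ ((p - 1) * m * rQ div 4)"
          using ev unfolding e_def qf_epsilon_def qf_varepsilon_def Let_def rQdef[symmetric] D_def by simp
        also have "(-1::int) ^ ((p - 1) * m * rQ div 4) = (-1) ^ (F.hq * j)"
          using F.eps_parity[OF ev] by (simp add: j_def)
        also have "\<dots> = eta K (-1) ^ j" using F.eta_minus1 by (simp add: power_mult)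
        finally show ?thesis using F.eta_pow_minus1[OF DK, of j] by simp
      qed
      have Zi: "int q * int (card {x \<in> E1. Q x = 0}) = int q ^ (m1 - rQ) * (int q ^ rQ + (int q - 1) * int q ^ j * e)"
        using Q1.Zcount(1)[OF \<open>card E1 = q ^ m1\<close>] ev unfolding rQdef[symmetric] e_eq D_def j_def by simp
      hence Zr: "real q * real (card {x \<in> E1. Q x = 0}) = real q ^ (m1 - rQ) * (real q ^ j * real q ^ j + (real q - 1) * real q ^ j * real_of_int e)"
      proof -
        have "real_of_int (int q * int (card {x \<in> E1. Q x = 0})) = real_of_int (int q ^ (m1 - rQ) * (int q ^ rQ + (int q - 1) * int q ^ j * e))"
          using Zi by simp
        moreover have "real q ^ rQ = real q ^ j * real q ^ j" using rj by (simp add: power_add[symmetric] mult_2)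
        ultimately show ?thesis by simp
      qed
      have ABC: "real q ^ (m1 - rQ) * (real q ^ j * real q ^ j) = real q * real q ^ (m1 - 1)"
      proof -
        have "real q ^ (m1 - rQ) * (real q ^ j * real q ^ j) = real q ^ (m1 - rQ + j + j)" by (simp add: power_add)
        also have "m1 - rQ + j + j = Suc (m1 - 1)" using rj rQm1 \<open>m1 \<ge> 1\<close> by simp
        finally show ?thesis by simp
      qed
      have Zf: "real (card {x \<in> E1. Q x = 0}) = real q ^ (m1 - 1) * (real_of_int e * (real q - 1) / real q ^ j + 1)"
        by (rule real_algebra_A[OF X0 _ ABC]) (use X0 Zr in \<open>simp_all add: algebra_simps\<close>)
      have "real (card S) = real q ^ (M - r) * (real_of_int e * (real q - 1) / real q ^ j + 1)"
        unfolding cS Mr using Zf by (simp add: algebra_simps)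
      moreover have "real t = real q - 1" using tq F.q_pos by (simp add: of_nat_diff)
      ultimately show "real N = real q ^ (M - r) * (real_of_int (qf_epsilon p m K E1 m1 Q) * real t / real q ^ (rQ div 2) + 1) - 1"
        using realN by (simp add: e_def j_def)
    next
      assume od: "odd rQ"
      have "card {x \<in> E1. Q x = 0} = q ^ (m1 - 1)"
        using Q1.Zcount(2)[OF \<open>card E1 = q ^ m1\<close>] od unfolding rQdef by simp
      hence "real (card S) = real q ^ (M - r)" unfolding cS Mr by simp
      thus "real N = real q ^ (M - r) - 1" using realN by simp
    qed
  qed
qed

end
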